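(* Let $\phi(w)=aw+b$ with $a>0$ and $b\in\mathbb{C}$, $\mathrm{Re}(b)\geq 0$, and let $C_\phi f=f\circ\phi$ on $H^2(\mathbb{C}_{+})$. (S.1) If either $a\neq 1$ and $\mathrm{Re}(b)=0$ (hyperbolic automorphism), or $a\in(1,\infty)$ and $\mathrm{Re}(b)>0$ (hyperbolic non-automorphism of type II), then $C_{\phi}$ has the positive shadowing property on $H^2(\mathbb{C}_{+})$. (S.2) If either $a=1$ (parabolic type), or $a\in(0,1)$ and $\mathrm{Re}(b)>0$ (hyperbolic non-automorphism of type I), then $C_{\phi}$ does not have the positive shadowing property on $H^2(\mathbb{C}_{+})$.
   Context: $\mathbb{C}_{+}=\{w\in\mathbb{C}:\mathrm{Re}(w)>0\}$. $H^2(\mathbb{C}_{+})$ is the Hardy space of holomorphic $f$ on $\mathbb{C}_{+}$ with finite norm $\|f\|_2^2=\sup_{0<x<\infty}\frac{1}{\pi}\int_{-\infty}^{\infty}|f(x+iy)|^2\,dy$; $C_\phi$ is bounded on it. For an operator $T$ on a Banach space $X$ and $\delta>0$, a sequence $(x_n)_{n\in\mathbb{N}}\subset X$ is a $\delta$-pseudotrajectory if $\|Tx_n-x_{n+1}\|\le\delta$ for all $n$. $T$ has the positive shadowing property if for every $\epsilon>0$ there is $\delta>0$ such that for every $\delta$-pseudotrajectory $(x_n)_{n\in\mathbb{N}}$ there exists $x\in X$ with $\|T^nx-x_n\|\le\epsilon$ for all $n\in\mathbb{N}$. *)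

theory Defs
  imports "HOL-Complex_Analysis.Complex_Analysis"
begin

definition rhp :: "complex set" where
  "rhp = {w. Re w > 0}"

definition hardy_sup :: "(complex \<Rightarrow> complex) \<Rightarrow> ennreal" where
  "hardy_sup f = (SUP x\<in>{0<..}. \<integral>\<^sup>+ y. ennreal ((cmod (f (Complex x y)))\<^sup>2) \<partial>lborel)"

text \<open>The Hardy space H^2 of the right half-plane (functions are only relevant on rhp).\<close>
definition H2 :: "(complex \<Rightarrow> complex) set" where
  "H2 = {f. f holomorphic_on rhp \<and> hardy_sup f < \<infinity>}"

definition H2_norm :: "(complex \<Rightarrow> complex) \<Rightarrow> real" where
  "H2_norm f = sqrt (enn2real (hardy_sup f) / pi)"

definition comp_op :: "(complex \<Rightarrow> complex) \<Rightarrow> (complex \<Rightarrow> complex) \<Rightarrow> (complex \<Rightarrow> complex)" where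
  "comp_op \<phi> f = f \<circ> \<phi>"

definition positive_shadowing ::
  "'a set \<Rightarrow> ('a \<Rightarrow> 'a \<Rightarrow> real) \<Rightarrow> ('a \<Rightarrow> 'a) \<Rightarrow> bool" where
  "positive_shadowing X d T \<longleftrightarrow>
     (\<forall>\<epsilon>>0. \<exists>\<delta>>0. \<forall>xs :: nat \<Rightarrow> 'a.
        ((\<forall>n. xs n \<in> X) \<and> (\<forall>n. d (T (xs n)) (xs (Suc n)) \<le> \<delta>)) \<longrightarrow>
        (\<exists>x\<in>X. \<forall>n. d ((T ^^ n) x) (xs n) \<le> \<epsilon>))"

definition H2_dist :: "(complex \<Rightarrow> complex) \<Rightarrow> (complex \<Rightarrow> complex) \<Rightarrow> real" where
  "H2_dist f g = H2_norm (\<lambda>w. f w - g w)"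

end

theory Submission
  imports Defs "HOL-Probability.Sinc_Integral"
begin

definition lin :: "(complex \<Rightarrow> complex) \<Rightarrow> real \<Rightarrow> ennreal" where
  "lin f x = (\<integral>\<^sup>+ y. ennreal ((cmod (f (Complex x y)))\<^sup>2) \<partial>lborel)"

definition hb :: "(complex \<Rightarrow> complex) \<Rightarrow> real \<Rightarrow> bool" where
  "hb f H \<longleftrightarrow> (\<forall>x>0. lin f x \<le> ennreal H)"

lemma hardy_sup_lin: "hardy_sup f = (SUP x\<in>{0<..}. lin f x)"
  unfolding hardy_sup_def lin_def by simp

lemma open_rhp: "open rhp"
  unfolding rhp_def by (simp add: open_halfspace_Re_gt)

lemma convex_rhp: "convex rhp"
  unfolding rhp_def by (simp add: convex_halfspace_Re_gt)

lemma Complex_rhp[simp]: "Complex x y \<in> rhp \<longleftrightarrow> x > 0"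
  unfolding rhp_def by simp

lemma cont_line:
  assumes "f holomorphic_on rhp" "x > 0"
  shows "continuous_on UNIV (\<lambda>y. f (Complex x y))"
proof -
  have c: "continuous_on rhp f" using assms(1) holomorphic_on_imp_continuous_on by blast
  have "continuous_on UNIV (\<lambda>y::real. Complex x y)"
    unfolding Complex_eq by (intro continuous_intros)
  moreover have "(\<lambda>y. Complex x y) ` UNIV \<subseteq> rhp" using assms(2) by auto
  ultimately show ?thesis using continuous_on_compose2[OF c] by blast
qed

lemma meas_line:
  assumes "f holomorphic_on rhp" "x > 0"
  shows "(\<lambda>y. ennreal ((cmod (f (Complex x y)))\<^sup>2)) \<in> borel_measurable borel"
proof -
  have [measurable]: "(\<lambda>y. f (Complex x y)) \<in> borel_measurable borel"
    by (rule borel_measurable_continuous_onI[OF cont_line[OF assms]])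
  show ?thesis by measurable
qed

lemma hb_hardy: "hb f H \<longleftrightarrow> hardy_sup f \<le> ennreal H"
  unfolding hb_def hardy_sup_lin by (auto simp: SUP_le_iff)

lemma hb_norm:
  assumes "hb f H" "H \<ge> 0"
  shows "H2_norm f \<le> sqrt (H / pi)"
proof -
  have "hardy_sup f \<le> ennreal H" using assms hb_hardy by blast
  then have "enn2real (hardy_sup f) \<le> enn2real (ennreal H)"
    by (intro enn2real_mono) auto
  then have "enn2real (hardy_sup f) \<le> H" using assms(2) by simp
  then show ?thesis unfolding H2_norm_def
    by (intro real_sqrt_le_mono divide_right_mono) auto
qed

lemma fin_hb:
  assumes "hardy_sup f < \<infinity>"
  shows "hb f (enn2real (hardy_sup f))" and "H2_norm f = sqrt (enn2real (hardy_sup f) / pi)"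
  using assms unfolding hb_hardy H2_norm_def by (auto simp: ennreal_enn2real_if)

lemma hb_fin: "hb f H \<Longrightarrow> hardy_sup f < \<infinity>"
  unfolding hb_hardy by (simp add: le_less_trans)

lemma norm_hb:
  assumes "hardy_sup f < \<infinity>"
  shows "hb f (pi * (H2_norm f)\<^sup>2)"
proof -
  have "pi * (H2_norm f)\<^sup>2 = enn2real (hardy_sup f)"
    unfolding fin_hb(2)[OF assms] by simp
  then show ?thesis using fin_hb(1)[OF assms] by simp
qed

lemma norm_lower:
  assumes "hardy_sup f < \<infinity>" "x > 0" "ennreal m \<le> lin f x" "m \<ge> 0"
  shows "sqrt (m / pi) \<le> H2_norm f"
proof -
  have "lin f x \<le> hardy_sup f" unfolding hardy_sup_lin using assms(2) by (auto intro: SUP_upper)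
  then have "ennreal m \<le> hardy_sup f" using assms(3) by simp
  then have "enn2real (ennreal m) \<le> enn2real (hardy_sup f)" using assms(1)
    by (intro enn2real_mono) auto
  then have "m \<le> enn2real (hardy_sup f)" using assms(4) by simp
  then show ?thesis unfolding H2_norm_def
    by (intro real_sqrt_le_mono divide_right_mono) auto
qed

lemma H2_norm_nonneg: "H2_norm f \<ge> 0"
  unfolding H2_norm_def by simp

lemma lin_cong: "(\<And>w. w \<in> rhp \<Longrightarrow> f w = g w) \<Longrightarrow> x > 0 \<Longrightarrow> lin f x = lin g x"
  unfolding lin_def by simp

lemma hardy_cong: "(\<And>w. w \<in> rhp \<Longrightarrow> f w = g w) \<Longrightarrow> hardy_sup f = hardy_sup g"
  unfolding hardy_sup_lin by (intro SUP_cong refl lin_cong) auto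

lemma norm_cong: "(\<And>w. w \<in> rhp \<Longrightarrow> f w = g w) \<Longrightarrow> H2_norm f = H2_norm g"
  unfolding H2_norm_def using hardy_cong by metis

lemma affine_Complex:
  "complex_of_real c * Complex x y + d = Complex (c * x + Re d) (Im d + c * y)"
  by (simp add: complex_eq_iff)

lemma lin_affine:
  assumes hol: "f holomorphic_on rhp" and c: "c > 0" and X: "c * x + Re d > 0"
  shows "lin (\<lambda>w. f (complex_of_real c * w + d)) x = ennreal (1 / c) * lin f (c * x + Re d)"
proof -
  let ?F = "\<lambda>y. ennreal ((cmod (f (Complex (c * x + Re d) y)))\<^sup>2)"
  have m: "?F \<in> borel_measurable borel" by (rule meas_line[OF hol X])
  have "lin f (c * x + Re d) = ennreal \<bar>c\<bar> * (\<integral>\<^sup>+ y. ?F (Im d + c * y) \<partial>lborel)"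
    unfolding lin_def by (rule nn_integral_real_affine[OF m]) (use c in auto)
  moreover have "lin (\<lambda>w. f (complex_of_real c * w + d)) x = (\<integral>\<^sup>+ y. ?F (Im d + c * y) \<partial>lborel)"
    unfolding lin_def affine_Complex ..
  ultimately show ?thesis using c
    by (simp add: ennreal_mult'[symmetric] mult.assoc[symmetric] flip: ennreal_mult)
qed

lemma hb_comp:
  assumes hol: "f holomorphic_on rhp" and c: "c > 0" and d: "Re d \<ge> 0"
    and hb: "hb f H" and H: "H \<ge> 0"
  shows "hb (\<lambda>w. f (complex_of_real c * w + d)) (H / c)"
  unfolding hb_def
proof (intro allI impI)
  fix x :: real assume x: "x > 0"
  have X: "c * x + Re d > 0" using c x d by (simp add: add_pos_nonneg)
  have "lin (\<lambda>w. f (complex_of_real c * w + d)) x = ennreal (1 / c) * lin f (c * x + Re d)"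
    by (rule lin_affine[OF hol c X])
  also have "\<dots> \<le> ennreal (1 / c) * ennreal H"
    using hb X unfolding hb_def by (intro mult_left_mono) auto
  also have "\<dots> = ennreal (H / c)" using c H by (simp add: ennreal_mult[symmetric])
  finally show "lin (\<lambda>w. f (complex_of_real c * w + d)) x \<le> ennreal (H / c)" .
qed

lemma hb_comp_rev:
  assumes hol: "f holomorphic_on rhp" and c: "c > 0" and d: "Re d = 0"
    and hb: "hb (\<lambda>w. f (complex_of_real c * w + d)) H" and H: "H \<ge> 0"
  shows "hb f (c * H)"
  unfolding hb_def
proof (intro allI impI)
  fix X :: real assume X: "X > 0"
  define x where "x = X / c"
  have x: "x > 0" and Xx: "c * x + Re d = X" using X c d by (auto simp: x_def)
  have "lin (\<lambda>w. f (complex_of_real c * w + d)) x = ennreal (1 / c) * lin f X"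
    using lin_affine[OF hol c, of x d] Xx X by simp
  then have "ennreal c * lin (\<lambda>w. f (complex_of_real c * w + d)) x = lin f X"
    using c by (simp add: mult.assoc[symmetric] ennreal_mult[symmetric])
  moreover have "ennreal c * lin (\<lambda>w. f (complex_of_real c * w + d)) x \<le> ennreal c * ennreal H"
    using hb x unfolding hb_def by (intro mult_left_mono) auto
  ultimately show "lin f X \<le> ennreal (c * H)" using c H by (simp add: ennreal_mult)
qed

lemma sq_ineq:
  fixes p q t :: real
  assumes "p \<ge> 0" "q \<ge> 0" "t > 0"
  shows "(p + q)\<^sup>2 \<le> (1 + t) * p\<^sup>2 + (1 + 1 / t) * q\<^sup>2"
proof -
  have "0 \<le> (t * p - q)\<^sup>2" by simp
  then have "2 * t * p * q \<le> t\<^sup>2 * p\<^sup>2 + q\<^sup>2" by (simp add: power2_eq_square algebra_simps)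
  then have "t * (p + q)\<^sup>2 \<le> t * ((1 + t) * p\<^sup>2 + (1 + 1 / t) * q\<^sup>2)"
    using assms by (simp add: power2_eq_square algebra_simps)
  then show ?thesis using assms(3) by simp
qed

lemma cmod_sq_ineq:
  assumes "t > 0"
  shows "(cmod (u + v))\<^sup>2 \<le> (1 + t) * (cmod u)\<^sup>2 + (1 + 1 / t) * (cmod v)\<^sup>2"
proof -
  have "(cmod (u + v))\<^sup>2 \<le> (cmod u + cmod v)\<^sup>2"
    by (intro power_mono norm_triangle_ineq) auto
  also have "\<dots> \<le> (1 + t) * (cmod u)\<^sup>2 + (1 + 1 / t) * (cmod v)\<^sup>2"
    by (rule sq_ineq) (use assms in auto)
  finally show ?thesis .
qed

lemma lin_add:
  assumes hf: "f holomorphic_on rhp" and hg: "g holomorphic_on rhp" and x: "x > 0" and t: "t > 0"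
  shows "lin (\<lambda>w. f w + g w) x \<le> ennreal (1 + t) * lin f x + ennreal (1 + 1 / t) * lin g x"
proof -
  have mf[measurable]: "(\<lambda>y. ennreal ((cmod (f (Complex x y)))\<^sup>2)) \<in> borel_measurable borel"
    by (rule meas_line[OF hf x])
  have mg[measurable]: "(\<lambda>y. ennreal ((cmod (g (Complex x y)))\<^sup>2)) \<in> borel_measurable borel"
    by (rule meas_line[OF hg x])
  have "lin (\<lambda>w. f w + g w) x \<le> (\<integral>\<^sup>+ y. ennreal (1 + t) * ennreal ((cmod (f (Complex x y)))\<^sup>2)
        + ennreal (1 + 1 / t) * ennreal ((cmod (g (Complex x y)))\<^sup>2) \<partial>lborel)"
    unfolding lin_def
  proof (intro nn_integral_mono)
    fix y
    have "(cmod (f (Complex x y) + g (Complex x y)))\<^sup>2 \<le>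
        (1 + t) * (cmod (f (Complex x y)))\<^sup>2 + (1 + 1 / t) * (cmod (g (Complex x y)))\<^sup>2"
      by (rule cmod_sq_ineq[OF t])
    then show "ennreal ((cmod (f (Complex x y) + g (Complex x y)))\<^sup>2) \<le>
        ennreal (1 + t) * ennreal ((cmod (f (Complex x y)))\<^sup>2)
        + ennreal (1 + 1 / t) * ennreal ((cmod (g (Complex x y)))\<^sup>2)"
      using t by (simp add: ennreal_mult[symmetric] ennreal_plus[symmetric] del: ennreal_plus)
  qed
  also have "\<dots> = ennreal (1 + t) * lin f x + ennreal (1 + 1 / t) * lin g x"
    unfolding lin_def
    using mf mg by (subst nn_integral_add) (auto simp: nn_integral_cmult)
  finally show ?thesis .
qed

lemma ennreal_le_limit:
  fixes C :: real
  assumes C: "C \<ge> 0" and h: "\<And>\<eta>. \<eta> > 0 \<Longrightarrow> z \<le> ennreal ((C + \<eta>)\<^sup>2)"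
  shows "z \<le> ennreal (C\<^sup>2)"
proof -
  have "z \<le> ennreal ((C + 1)\<^sup>2)" using h by simp
  then obtain v where v: "z = ennreal v" "v \<ge> 0"
    by (metis ennreal_cases ennreal_less_top not_le top.extremum_unique)
  have "v \<le> C\<^sup>2"
  proof (rule field_le_epsilon)
    fix e :: real assume e: "e > 0"
    define \<eta> where "\<eta> = min 1 (e / (2 * C + 1))"
    have eta: "\<eta> > 0" "\<eta> \<le> 1" "\<eta> \<le> e / (2 * C + 1)" using e C by (auto simp: \<eta>_def)
    have "v \<le> (C + \<eta>)\<^sup>2" using h[OF eta(1)] v by (auto simp: ennreal_le_iff2)
    also have "\<dots> = C\<^sup>2 + \<eta> * (2 * C + \<eta>)" by (simp add: power2_eq_square algebra_simps)
    also have "\<eta> * (2 * C + \<eta>) \<le> \<eta> * (2 * C + 1)" using eta by (intro mult_left_mono) auto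
    also have "\<dots> \<le> e" using eta C by (simp add: pos_le_divide_eq mult.commute)
    finally show "v \<le> C\<^sup>2 + e" by simp
  qed
  then show ?thesis using v by simp
qed

lemma hb_add:
  assumes hf: "f holomorphic_on rhp" and hg: "g holomorphic_on rhp"
    and A: "A \<ge> 0" and B: "B \<ge> 0" and fA: "hb f (A\<^sup>2)" and gB: "hb g (B\<^sup>2)"
  shows "hb (\<lambda>w. f w + g w) ((A + B)\<^sup>2)"
  unfolding hb_def
proof (intro allI impI)
  fix x :: real assume x: "x > 0"
  show "lin (\<lambda>w. f w + g w) x \<le> ennreal ((A + B)\<^sup>2)"
  proof (rule ennreal_le_limit)
    fix \<eta> :: real assume eta: "\<eta> > 0"
    define A' where "A' = A + \<eta> / 2"
    define B' where "B' = B + \<eta> / 2"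
    have A': "A' > 0" "A \<le> A'" and B': "B' > 0" "B \<le> B'" using A B eta by (auto simp: A'_def B'_def)
    define t where "t = B' / A'"
    have t: "t > 0" using A' B' by (simp add: t_def)
    have "lin (\<lambda>w. f w + g w) x \<le> ennreal (1 + t) * lin f x + ennreal (1 + 1 / t) * lin g x"
      by (rule lin_add[OF hf hg x t])
    also have "\<dots> \<le> ennreal (1 + t) * ennreal (A\<^sup>2) + ennreal (1 + 1 / t) * ennreal (B\<^sup>2)"
      using fA gB x unfolding hb_def by (intro add_mono mult_left_mono) auto
    also have "\<dots> = ennreal ((1 + t) * A\<^sup>2 + (1 + 1 / t) * B\<^sup>2)"
      using t by (simp add: ennreal_mult[symmetric] ennreal_plus[symmetric] del: ennreal_plus)
    also have "(1 + t) * A\<^sup>2 + (1 + 1 / t) * B\<^sup>2 \<le> (1 + t) * A'\<^sup>2 + (1 + 1 / t) * B'\<^sup>2"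
      using t A B A' B' by (intro add_mono mult_left_mono power_mono) auto
    also have "(1 + t) * A'\<^sup>2 + (1 + 1 / t) * B'\<^sup>2 = (A' + B')\<^sup>2"
      using A' B' by (simp add: t_def power2_eq_square field_simps)
    also have "A' + B' = A + B + \<eta>" by (simp add: A'_def B'_def)
    finally show "lin (\<lambda>w. f w + g w) x \<le> ennreal ((A + B + \<eta>)\<^sup>2)"
      by (simp add: ennreal_leI)
  qed (use A B in auto)
qed

lemma lin_scale:
  assumes hf: "f holomorphic_on rhp" and x: "x > 0"
  shows "lin (\<lambda>w. c * f w) x = ennreal ((cmod c)\<^sup>2) * lin f x"
proof -
  have mf[measurable]: "(\<lambda>y. ennreal ((cmod (f (Complex x y)))\<^sup>2)) \<in> borel_measurable borel"
    by (rule meas_line[OF hf x])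
  show ?thesis unfolding lin_def
    using mf by (simp add: norm_mult power_mult_distrib ennreal_mult nn_integral_cmult)
qed

lemma hb_scale:
  assumes hf: "f holomorphic_on rhp" and fH: "hb f H" and H: "H \<ge> 0"
  shows "hb (\<lambda>w. c * f w) ((cmod c)\<^sup>2 * H)"
  unfolding hb_def
proof (intro allI impI)
  fix x :: real assume x: "x > 0"
  have "lin (\<lambda>w. c * f w) x = ennreal ((cmod c)\<^sup>2) * lin f x" by (rule lin_scale[OF hf x])
  also have "\<dots> \<le> ennreal ((cmod c)\<^sup>2) * ennreal H" using fH x unfolding hb_def
    by (intro mult_left_mono) auto
  finally show "lin (\<lambda>w. c * f w) x \<le> ennreal ((cmod c)\<^sup>2 * H)" using H by (simp add: ennreal_mult)
qed

lemma hb_mono: "hb f H \<Longrightarrow> H \<le> H' \<Longrightarrow> hb f H'"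
  unfolding hb_def by (meson ennreal_leI order_trans)

lemma norm_sq_hb:
  assumes "hardy_sup f < \<infinity>"
  shows "hb f ((sqrt pi * H2_norm f)\<^sup>2)"
  using norm_hb[OF assms] by (simp add: power_mult_distrib)

lemma H2_triangle:
  assumes hf: "f holomorphic_on rhp" and hg: "g holomorphic_on rhp"
    and ff: "hardy_sup f < \<infinity>" and fg: "hardy_sup g < \<infinity>"
  shows "hardy_sup (\<lambda>w. f w + g w) < \<infinity>"
    and "H2_norm (\<lambda>w. f w + g w) \<le> H2_norm f + H2_norm g"
proof -
  have h: "hb (\<lambda>w. f w + g w) ((sqrt pi * H2_norm f + sqrt pi * H2_norm g)\<^sup>2)"
    by (rule hb_add[OF hf hg _ _ norm_sq_hb[OF ff] norm_sq_hb[OF fg]]) (auto simp: H2_norm_nonneg)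
  then show "hardy_sup (\<lambda>w. f w + g w) < \<infinity>" by (rule hb_fin)
  have "H2_norm (\<lambda>w. f w + g w) \<le> sqrt ((sqrt pi * H2_norm f + sqrt pi * H2_norm g)\<^sup>2 / pi)"
    by (rule hb_norm[OF h]) simp
  also have "\<dots> = H2_norm f + H2_norm g"
    by (simp add: distrib_left[symmetric] power_mult_distrib H2_norm_nonneg)
  finally show "H2_norm (\<lambda>w. f w + g w) \<le> H2_norm f + H2_norm g" .
qed

lemma H2_scale:
  assumes hf: "f holomorphic_on rhp" and ff: "hardy_sup f < \<infinity>"
  shows "hardy_sup (\<lambda>w. c * f w) < \<infinity>" and "H2_norm (\<lambda>w. c * f w) \<le> cmod c * H2_norm f"
proof -
  have h: "hb (\<lambda>w. c * f w) ((cmod c)\<^sup>2 * (pi * (H2_norm f)\<^sup>2))"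
    by (rule hb_scale[OF hf norm_hb[OF ff]]) simp
  then show "hardy_sup (\<lambda>w. c * f w) < \<infinity>" by (rule hb_fin)
  have "H2_norm (\<lambda>w. c * f w) \<le> sqrt ((cmod c)\<^sup>2 * (pi * (H2_norm f)\<^sup>2) / pi)"
    by (rule hb_norm[OF h]) simp
  also have "\<dots> = cmod c * H2_norm f"
    by (simp add: real_sqrt_mult H2_norm_nonneg)
  finally show "H2_norm (\<lambda>w. c * f w) \<le> cmod c * H2_norm f" .
qed

lemma nn_inv_sq: "(\<integral>\<^sup>+ y. ennreal (inverse (1 + y\<^sup>2)) \<partial>lborel) = ennreal pi"
proof -
  have i: "integrable lborel (\<lambda>y::real. inverse (1 + y\<^sup>2))"
    using integrable_inverse_1_plus_square unfolding set_integrable_def by simp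
  have "(LBINT y. inverse (1 + y\<^sup>2)) = pi"
    using LBINT_inverse_1_plus_square by (simp add: interval_lebesgue_integral_def set_lebesgue_integral_def)
  then show ?thesis
    by (subst nn_integral_eq_integral[OF i]) auto
qed

lemma lin_u:
  assumes x: "x > 0"
  shows "lin (\<lambda>w. 1 / (w + 1)) x = ennreal (pi / (x + 1))"
proof -
  define c where "c = x + 1"
  have c: "c > 0" using x by (simp add: c_def)
  have pos: "c\<^sup>2 + y\<^sup>2 > 0" for y using c by (simp add: add_pos_nonneg)
  have e: "(cmod (1 / (Complex x y + 1)))\<^sup>2 = inverse (c\<^sup>2 + y\<^sup>2)" for y
  proof -
    have "Complex x y + 1 = Complex c y" by (simp add: c_def complex_eq_iff)
    then show ?thesis using pos[of y]
      by (simp add: divide_inverse norm_inverse power_inverse cmod_power2)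
  qed
  define F where "F = (\<lambda>y::real. ennreal (inverse (c\<^sup>2 + y\<^sup>2)))"
  have Fm: "F \<in> borel_measurable borel" unfolding F_def by measurable
  have "(\<integral>\<^sup>+ y. F y \<partial>lborel) = ennreal \<bar>c\<bar> * (\<integral>\<^sup>+ y. F (0 + c * y) \<partial>lborel)"
    by (rule nn_integral_real_affine[OF Fm]) (use c in auto)
  also have "(\<lambda>y. F (0 + c * y)) = (\<lambda>y. ennreal (inverse (c\<^sup>2)) * ennreal (inverse (1 + y\<^sup>2)))"
  proof
    fix y
    have "inverse (c\<^sup>2 + (c * y)\<^sup>2) = inverse (c\<^sup>2) * inverse (1 + y\<^sup>2)"
      using c by (simp add: power_mult_distrib field_simps)
    then show "F (0 + c * y) = ennreal (inverse (c\<^sup>2)) * ennreal (inverse (1 + y\<^sup>2))"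
      unfolding F_def by (simp add: ennreal_mult[symmetric])
  qed
  also have "(\<integral>\<^sup>+ y. ennreal (inverse (c\<^sup>2)) * ennreal (inverse (1 + y\<^sup>2)) \<partial>lborel)
      = ennreal (inverse (c\<^sup>2)) * ennreal pi"
    by (subst nn_integral_cmult) (auto simp: nn_inv_sq)
  also have "ennreal \<bar>c\<bar> * (ennreal (inverse (c\<^sup>2)) * ennreal pi) = ennreal (pi / c)"
    using c by (simp add: ennreal_mult[symmetric] power2_eq_square field_simps)
  finally have "(\<integral>\<^sup>+ y. F y \<partial>lborel) = ennreal (pi / c)" .
  then show ?thesis unfolding lin_def e F_def c_def by simp
qed

definition u0 :: "complex \<Rightarrow> complex" where "u0 = (\<lambda>w. 1 / (w + 1))"

lemma u0_holo: "u0 holomorphic_on rhp"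
  unfolding u0_def rhp_def
proof (intro holomorphic_intros)
  fix w :: complex assume "w \<in> {w. 0 < Re w}"
  then have "Re (w + 1) > 0" by simp
  then show "w + 1 \<noteq> 0" by (metis order_less_irrefl zero_complex.sel(1))
qed

lemma u0_hb: "hb u0 pi"
  unfolding hb_def u0_def
proof (intro allI impI)
  fix x :: real assume x: "x > 0"
  have "pi / (x + 1) \<le> pi" using x by (simp add: divide_le_eq)
  then show "lin (\<lambda>w. 1 / (w + 1)) x \<le> ennreal pi" using lin_u[OF x] by (simp add: ennreal_leI)
qed

lemma u0_H2: "u0 \<in> H2"
  unfolding H2_def using u0_holo hb_fin[OF u0_hb] by simp

lemma u0_norm_le: "H2_norm u0 \<le> 1"
  using hb_norm[OF u0_hb] by simp

lemma u0_norm_pos: "H2_norm u0 > 0"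
proof -
  have l: "ennreal (pi / 2) \<le> lin u0 1" by (simp add: u0_def lin_u)
  have "sqrt ((pi / 2) / pi) \<le> H2_norm u0"
    by (rule norm_lower[OF hb_fin[OF u0_hb] _ l]) auto
  moreover have "sqrt ((pi / 2) / pi) > 0" by simp
  ultimately show ?thesis by linarith
qed

lemma comp_op_pow: "(comp_op \<phi> ^^ n) f = f \<circ> (\<phi> ^^ n)"
proof (induction n)
  case 0 then show ?case by simp
next
  case (Suc n)
  have "(comp_op \<phi> ^^ Suc n) f = comp_op \<phi> ((comp_op \<phi> ^^ n) f)" by simp
  also have "\<dots> = f \<circ> (\<phi> ^^ n) \<circ> \<phi>" unfolding Suc comp_op_def ..
  also have "\<dots> = f \<circ> (\<phi> ^^ Suc n)" by (simp only: funpow_Suc_right comp_assoc)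
  finally show ?case .
qed

lemma comp_op_pow_app: "(comp_op \<phi> ^^ n) f w = f ((\<phi> ^^ n) w)"
  by (simp add: comp_op_pow)

lemma aff_rhp:
  assumes "a > 0" "Re b \<ge> 0" "w \<in> rhp"
  shows "complex_of_real a * w + b \<in> rhp"
  using assms unfolding rhp_def by (simp add: add_pos_nonneg)

lemma aff_pow_rhp:
  assumes "a > 0" "Re b \<ge> 0" "w \<in> rhp"
  shows "((\<lambda>w. complex_of_real a * w + b) ^^ n) w \<in> rhp"
  by (induction n) (use assms aff_rhp in auto)

lemma holo_T:
  assumes "a > 0" "Re b \<ge> 0" "f holomorphic_on rhp"
  shows "comp_op (\<lambda>w. complex_of_real a * w + b) f holomorphic_on rhp"
proof -
  have "(f \<circ> (\<lambda>w. complex_of_real a * w + b)) holomorphic_on rhp"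
    by (rule holomorphic_on_compose_gen[OF _ assms(3)])
       (use aff_rhp[OF assms(1,2)] in \<open>auto intro!: holomorphic_intros\<close>)
  then show ?thesis by (simp add: comp_op_def)
qed

lemma H2_T:
  assumes a: "a > 0" and b: "Re b \<ge> 0" and f: "f \<in> H2"
  shows "comp_op (\<lambda>w. complex_of_real a * w + b) f \<in> H2"
    and "H2_norm (comp_op (\<lambda>w. complex_of_real a * w + b) f) \<le> H2_norm f / sqrt a"
proof -
  have hol: "f holomorphic_on rhp" and fin: "hardy_sup f < \<infinity>" using f by (auto simp: H2_def)
  have e: "comp_op (\<lambda>w. complex_of_real a * w + b) f = (\<lambda>w. f (complex_of_real a * w + b))"
    by (simp add: comp_op_def comp_def)
  have h: "hb (comp_op (\<lambda>w. complex_of_real a * w + b) f) (pi * (H2_norm f)\<^sup>2 / a)"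
    unfolding e by (rule hb_comp[OF hol a b norm_hb[OF fin]]) simp
  show "comp_op (\<lambda>w. complex_of_real a * w + b) f \<in> H2"
    using holo_T[OF a b hol] hb_fin[OF h] by (simp add: H2_def)
  have "H2_norm (comp_op (\<lambda>w. complex_of_real a * w + b) f) \<le> sqrt (pi * (H2_norm f)\<^sup>2 / a / pi)"
    by (rule hb_norm[OF h]) (use a in simp)
  also have "\<dots> = H2_norm f / sqrt a"
    using a by (simp add: real_sqrt_divide H2_norm_nonneg)
  finally show "H2_norm (comp_op (\<lambda>w. complex_of_real a * w + b) f) \<le> H2_norm f / sqrt a" .
qed

lemma H2_iter:
  assumes a: "a > 0" and b: "Re b \<ge> 0" and f: "f \<in> H2"
  shows "(comp_op (\<lambda>w. complex_of_real a * w + b) ^^ n) f \<in> H2"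
  by (induction n) (use f H2_T[OF a b] in auto)

lemma H2_add:
  assumes "f \<in> H2" "g \<in> H2"
  shows "(\<lambda>w. f w + g w) \<in> H2" and "H2_norm (\<lambda>w. f w + g w) \<le> H2_norm f + H2_norm g"
  using assms H2_triangle[of f g] by (auto simp: H2_def intro!: holomorphic_intros)

lemma H2_smult:
  assumes "f \<in> H2"
  shows "(\<lambda>w. c * f w) \<in> H2" and "H2_norm (\<lambda>w. c * f w) \<le> cmod c * H2_norm f"
  using assms H2_scale[of f c] by (auto simp: H2_def intro!: holomorphic_intros)

lemma H2_smult_ge:
  assumes "f \<in> H2" "c \<noteq> 0"
  shows "cmod c * H2_norm f \<le> H2_norm (\<lambda>w. c * f w)"
proof -
  have "H2_norm (\<lambda>w. inverse c * (c * f w)) \<le> cmod (inverse c) * H2_norm (\<lambda>w. c * f w)"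
    by (rule H2_smult(2)[OF H2_smult(1)[OF assms(1)]])
  moreover have "(\<lambda>w. inverse c * (c * f w)) = f" using assms(2)
    by (simp add: mult.assoc[symmetric])
  ultimately have "H2_norm f \<le> cmod (inverse c) * H2_norm (\<lambda>w. c * f w)"
    by simp
  then have "cmod c * H2_norm f \<le> cmod c * (cmod (inverse c) * H2_norm (\<lambda>w. c * f w))"
    by (intro mult_left_mono) auto
  moreover have "cmod c * (cmod (inverse c) * H2_norm (\<lambda>w. c * f w)) = H2_norm (\<lambda>w. c * f w)"
    using assms(2) by (simp add: norm_inverse)
  ultimately show ?thesis by linarith
qed

lemma H2_diff:
  assumes "f \<in> H2" "g \<in> H2"
  shows "(\<lambda>w. f w - g w) \<in> H2" and "H2_norm (\<lambda>w. f w - g w) \<le> H2_norm f + H2_norm g"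
proof -
  have e: "(\<lambda>w. f w - g w) = (\<lambda>w. f w + (-1) * g w)" by simp
  show "(\<lambda>w. f w - g w) \<in> H2" unfolding e by (intro H2_add H2_smult assms)
  have "H2_norm (\<lambda>w. f w + (-1) * g w) \<le> H2_norm f + H2_norm (\<lambda>w. (-1) * g w)"
    by (intro H2_add H2_smult assms)
  also have "H2_norm (\<lambda>w. (-1) * g w) \<le> H2_norm g" using H2_smult(2)[OF assms(2), of "-1"] by simp
  finally show "H2_norm (\<lambda>w. f w - g w) \<le> H2_norm f + H2_norm g" unfolding e by simp
qed

lemma H2_zero: "(\<lambda>w. 0) \<in> H2" "H2_norm (\<lambda>w. 0) = 0"
proof -
  have h: "hb (\<lambda>w. 0) 0" unfolding hb_def lin_def by simp
  show "(\<lambda>w. 0) \<in> H2" using hb_fin[OF h] by (simp add: H2_def)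
  show "H2_norm (\<lambda>w. 0) = 0" using hb_norm[OF h] H2_norm_nonneg[of "\<lambda>w. 0"] by simp
qed

lemma shadow_contr:
  assumes TH: "\<And>f. f \<in> H2 \<Longrightarrow> T f \<in> H2 \<and> H2_norm (T f) \<le> q * H2_norm f"
    and lin: "\<And>f g. T (\<lambda>w. f w - g w) = (\<lambda>w. T f w - T g w)"
    and q: "0 \<le> q" "q < 1"
  shows "positive_shadowing H2 H2_dist T"
  unfolding positive_shadowing_def
proof (intro allI impI)
  fix \<epsilon> :: real assume e: "\<epsilon> > 0"
  define \<delta> where "\<delta> = \<epsilon> * (1 - q)"
  have d: "\<delta> > 0" using e q by (simp add: \<delta>_def)
  show "\<exists>\<delta>>0. \<forall>xs. (\<forall>n. xs n \<in> H2) \<and> (\<forall>n. H2_dist (T (xs n)) (xs (Suc n)) \<le> \<delta>) \<longrightarrow>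
          (\<exists>x\<in>H2. \<forall>n. H2_dist ((T ^^ n) x) (xs n) \<le> \<epsilon>)"
  proof (intro exI[of _ \<delta>] conjI allI impI d)
    fix xs assume h: "(\<forall>n. xs n \<in> H2) \<and> (\<forall>n. H2_dist (T (xs n)) (xs (Suc n)) \<le> \<delta>)"
    have it: "(T ^^ n) (xs 0) \<in> H2" for n by (induction n) (use h TH in auto)
    have main: "(\<lambda>w. (T ^^ n) (xs 0) w - xs n w) \<in> H2 \<and> H2_norm (\<lambda>w. (T ^^ n) (xs 0) w - xs n w) \<le> \<epsilon>" for n
    proof (induction n)
      case 0 then show ?case using H2_zero e by simp
    next
      case (Suc n)
      define g where "g = (\<lambda>w. (T ^^ n) (xs 0) w - xs n w)"
      define en where "en = (\<lambda>w. T (xs n) w - xs (Suc n) w)"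
      have eq: "(\<lambda>w. (T ^^ Suc n) (xs 0) w - xs (Suc n) w) = (\<lambda>w. T g w + en w)"
        unfolding g_def en_def lin by simp
      have gH: "g \<in> H2" using Suc g_def by simp
      have enH: "en \<in> H2" unfolding en_def using h TH by (intro H2_diff) auto
      have "H2_norm (\<lambda>w. T g w + en w) \<le> H2_norm (T g) + H2_norm en"
        by (rule H2_add(2)) (use TH gH enH in auto)
      also have "\<dots> \<le> q * \<epsilon> + \<delta>"
      proof (intro add_mono)
        have "H2_norm (T g) \<le> q * H2_norm g" using TH[OF gH] by simp
        also have "\<dots> \<le> q * \<epsilon>" using Suc q unfolding g_def by (intro mult_left_mono) auto
        finally show "H2_norm (T g) \<le> q * \<epsilon>" .
        show "H2_norm en \<le> \<delta>" using h unfolding en_def H2_dist_def by simp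
      qed
      also have "\<dots> = \<epsilon>" by (simp add: \<delta>_def algebra_simps)
      finally show ?case unfolding eq using H2_add(1) TH gH enH by auto
    qed
    show "\<exists>x\<in>H2. \<forall>n. H2_dist ((T ^^ n) x) (xs n) \<le> \<epsilon>"
      using main h unfolding H2_dist_def by blast
  qed
qed

lemma seg_lower:
  assumes fin: "hardy_sup g < \<infinity>" and x0: "x0 > 0" and y: "y1 \<le> y2" and K: "K \<ge> 0"
    and bd: "\<And>y. y1 \<le> y \<Longrightarrow> y \<le> y2 \<Longrightarrow> K \<le> cmod (g (Complex x0 y))"
  shows "sqrt ((y2 - y1) * K\<^sup>2 / pi) \<le> H2_norm g"
proof -
  have "(\<integral>\<^sup>+ y. ennreal (K\<^sup>2) * indicator {y1..y2} y \<partial>lborel) = ennreal (K\<^sup>2) * emeasure lborel {y1..y2}"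
    by (rule nn_integral_cmult_indicator) simp
  also have "\<dots> = ennreal ((y2 - y1) * K\<^sup>2)" using y by (simp add: ennreal_mult mult.commute)
  finally have "ennreal ((y2 - y1) * K\<^sup>2) = (\<integral>\<^sup>+ y. ennreal (K\<^sup>2) * indicator {y1..y2} y \<partial>lborel)" ..
  also have "\<dots> \<le> lin g x0" unfolding lin_def
  proof (intro nn_integral_mono)
    fix y
    show "ennreal (K\<^sup>2) * indicator {y1..y2} y \<le> ennreal ((cmod (g (Complex x0 y)))\<^sup>2)"
    proof (cases "y \<in> {y1..y2}")
      case True
      then have "K\<^sup>2 \<le> (cmod (g (Complex x0 y)))\<^sup>2" using bd K by (intro power_mono) auto
      then show ?thesis using True by (simp add: ennreal_leI)
    qed simp
  qed
  finally show ?thesis by (rule norm_lower[OF fin x0]) (use y in simp)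
qed

definition Ssum :: "(complex \<Rightarrow> complex) \<Rightarrow> nat \<Rightarrow> complex \<Rightarrow> complex" where
  "Ssum \<phi> n w = (\<Sum>j<n. u0 ((\<phi> ^^ j) w))"

lemma Ssum_H2:
  assumes a: "a > 0" and b: "Re b \<ge> 0"
  shows "Ssum (\<lambda>w. complex_of_real a * w + b) n \<in> H2"
proof (induction n)
  case 0
  then show ?case using H2_zero by (simp add: Ssum_def[abs_def])
next
  case (Suc n)
  have e: "Ssum (\<lambda>w. complex_of_real a * w + b) (Suc n) =
      (\<lambda>w. Ssum (\<lambda>w. complex_of_real a * w + b) n w + (comp_op (\<lambda>w. complex_of_real a * w + b) ^^ n) u0 w)"
    by (simp add: Ssum_def[abs_def] comp_op_pow_app)
  show ?case unfolding e by (intro H2_add Suc H2_iter[OF a b] u0_H2)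
qed

lemma Ssum_step:
  "comp_op \<phi> (\<lambda>w. c * Ssum \<phi> n w) w - c * Ssum \<phi> (Suc n) w = - c * u0 w"
proof -
  have "comp_op \<phi> (\<lambda>w. c * Ssum \<phi> n w) w = c * (\<Sum>j<n. u0 ((\<phi> ^^ Suc j) w))"
    by (simp add: comp_op_def Ssum_def funpow_Suc_right del: funpow.simps)
  moreover have "Ssum \<phi> (Suc n) w = u0 w + (\<Sum>j<n. u0 ((\<phi> ^^ Suc j) w))"
    unfolding Ssum_def by (subst sum.lessThan_Suc_shift) simp
  ultimately show ?thesis by (simp add: algebra_simps)
qed

lemma Ssum_pseudo:
  assumes a: "a > 0" and b: "Re b \<ge> 0"
  shows "H2_dist (comp_op (\<lambda>w. complex_of_real a * w + b) (\<lambda>w. c * Ssum (\<lambda>w. complex_of_real a * w + b) n w))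
                 (\<lambda>w. c * Ssum (\<lambda>w. complex_of_real a * w + b) (Suc n) w) \<le> cmod c"
proof -
  have "H2_norm (\<lambda>w. (- c) * u0 w) \<le> cmod (- c) * H2_norm u0" by (rule H2_smult(2)[OF u0_H2])
  also have "\<dots> \<le> cmod c" using u0_norm_le by (simp add: mult_left_le)
  finally show ?thesis unfolding H2_dist_def Ssum_step by simp
qed

lemma no_shadow_generic:
  assumes "\<And>\<delta>. \<delta> > 0 \<Longrightarrow> \<exists>xs. (\<forall>n. xs n \<in> H2) \<and> (\<forall>n. H2_dist (T (xs n)) (xs (Suc n)) \<le> \<delta>) \<and>
              (\<forall>x\<in>H2. \<exists>n. H2_dist ((T ^^ n) x) (xs n) > 1)"
  shows "\<not> positive_shadowing H2 H2_dist T"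
proof
  assume "positive_shadowing H2 H2_dist T"
  then obtain \<delta> where d: "\<delta> > 0" and sh: "\<And>xs. (\<forall>n. xs n \<in> H2) \<and> (\<forall>n. H2_dist (T (xs n)) (xs (Suc n)) \<le> \<delta>) \<Longrightarrow>
        (\<exists>x\<in>H2. \<forall>n. H2_dist ((T ^^ n) x) (xs n) \<le> 1)"
    unfolding positive_shadowing_def by (meson zero_less_one)
  obtain xs where xs: "\<forall>n. xs n \<in> H2" "\<forall>n. H2_dist (T (xs n)) (xs (Suc n)) \<le> \<delta>"
      "\<forall>x\<in>H2. \<exists>n. H2_dist ((T ^^ n) x) (xs n) > 1"
    using assms[OF d] by blast
  from sh[OF conjI[OF xs(1,2)]] obtain x where "x \<in> H2" "\<forall>n. H2_dist ((T ^^ n) x) (xs n) \<le> 1" by blast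
  with xs(3) show False by (meson not_le)
qed

lemma Ssum_pseudo_all:
  assumes a: "a > 0" and b: "Re b \<ge> 0" and d: "\<delta> > 0"
  shows "(\<forall>n. (\<lambda>w. complex_of_real \<delta> * Ssum (\<lambda>w. complex_of_real a * w + b) n w) \<in> H2) \<and>
         (\<forall>n. H2_dist (comp_op (\<lambda>w. complex_of_real a * w + b) (\<lambda>w. complex_of_real \<delta> * Ssum (\<lambda>w. complex_of_real a * w + b) n w))
                 (\<lambda>w. complex_of_real \<delta> * Ssum (\<lambda>w. complex_of_real a * w + b) (Suc n) w) \<le> \<delta>)"
  using Ssum_pseudo[OF a b, of "complex_of_real \<delta>"] H2_smult(1)[OF Ssum_H2[OF a b]] d by auto

lemma N_iter_le:
  assumes a: "a = 1" and b: "Re b \<ge> 0" and f: "f \<in> H2"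
  shows "H2_norm ((comp_op (\<lambda>w. complex_of_real a * w + b) ^^ n) f) \<le> H2_norm f"
proof (induction n)
  case (Suc n)
  have a0: "a > 0" using a by simp
  have "H2_norm ((comp_op (\<lambda>w. complex_of_real a * w + b) ^^ Suc n) f)
     \<le> H2_norm ((comp_op (\<lambda>w. complex_of_real a * w + b) ^^ n) f) / sqrt a"
    using H2_T(2)[OF a0 b H2_iter[OF a0 b f, of n]] by simp
  then show ?case using Suc a by simp
qed simp

lemma iso_norm:
  assumes a: "a = 1" and b: "Re b = 0" and f: "f \<in> H2"
  shows "H2_norm (comp_op (\<lambda>w. complex_of_real a * w + b) f) = H2_norm f"
proof -
  have b': "Re b \<ge> 0" using b by simp
  have Tf: "comp_op (\<lambda>w. complex_of_real a * w + b) f \<in> H2" by (rule H2_T(1)[OF _ b' f]) (simp add: a)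
  have le: "H2_norm (comp_op (\<lambda>w. complex_of_real a * w + b) f) \<le> H2_norm f"
    using H2_T(2)[OF _ b' f, of a] a by simp
  have hol: "f holomorphic_on rhp" using f by (simp add: H2_def)
  have "hb (comp_op (\<lambda>w. complex_of_real a * w + b) f) (pi * (H2_norm (comp_op (\<lambda>w. complex_of_real a * w + b) f))\<^sup>2)"
    by (rule norm_hb) (use Tf in \<open>simp add: H2_def\<close>)
  then have "hb (\<lambda>w. f (complex_of_real a * w + b)) (pi * (H2_norm (comp_op (\<lambda>w. complex_of_real a * w + b) f))\<^sup>2)"
    by (simp add: comp_op_def comp_def)
  then have "hb f (a * (pi * (H2_norm (comp_op (\<lambda>w. complex_of_real a * w + b) f))\<^sup>2))"
    by (intro hb_comp_rev[OF hol _ b]) (auto simp: a)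
  then have "H2_norm f \<le> sqrt (a * (pi * (H2_norm (comp_op (\<lambda>w. complex_of_real a * w + b) f))\<^sup>2) / pi)"
    by (rule hb_norm) (simp add: a)
  then have "H2_norm f \<le> H2_norm (comp_op (\<lambda>w. complex_of_real a * w + b) f)"
    by (simp add: H2_norm_nonneg a)
  with le show ?thesis by simp
qed

lemma iso_iter:
  assumes a: "a = 1" and b: "Re b = 0" and f: "f \<in> H2"
  shows "H2_norm ((comp_op (\<lambda>w. complex_of_real a * w + b) ^^ n) f) = H2_norm f"
proof (induction n)
  case (Suc n)
  have "H2_norm ((comp_op (\<lambda>w. complex_of_real a * w + b) ^^ Suc n) f)
     = H2_norm ((comp_op (\<lambda>w. complex_of_real a * w + b) ^^ n) f)"
  proof -
    have a0: "a > 0" and b': "Re b \<ge> 0" using a b by auto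
    show ?thesis using iso_norm[OF a b H2_iter[OF a0 b' f, of n]] by simp
  qed
  then show ?case using Suc by simp
qed simp

theorem case_parabolic_aut:
  assumes a: "a = 1" and b: "Re b = 0"
  shows "\<not> positive_shadowing H2 H2_dist (comp_op (\<lambda>w. complex_of_real a * w + b))"
proof (rule no_shadow_generic)
  fix \<delta> :: real assume d: "\<delta> > 0"
  have b': "Re b \<ge> 0" using b by simp
  define \<phi> where "\<phi> = (\<lambda>w. complex_of_real a * w + b)"
  define T where "T = comp_op \<phi>"
  define xs where "xs = (\<lambda>n w. complex_of_real (real n * \<delta>) * (T ^^ n) u0 w)"
  have it: "(T ^^ n) u0 \<in> H2" for n unfolding T_def \<phi>_def by (rule H2_iter[OF _ b' u0_H2]) (simp add: a)
  have xsH: "xs n \<in> H2" for n unfolding xs_def by (rule H2_smult(1)[OF it])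
  have ps: "H2_dist (T (xs n)) (xs (Suc n)) \<le> \<delta>" for n
  proof -
    have e: "(\<lambda>w. T (xs n) w - xs (Suc n) w) = (\<lambda>w. complex_of_real (- \<delta>) * (T ^^ Suc n) u0 w)"
    proof
      fix w
      have "T (xs n) w = complex_of_real (real n * \<delta>) * u0 ((\<phi> ^^ Suc n) w)"
        unfolding xs_def T_def by (simp add: comp_op_pow_app comp_op_def funpow_Suc_right del: funpow.simps)
      moreover have "xs (Suc n) w = complex_of_real (real (Suc n) * \<delta>) * u0 ((\<phi> ^^ Suc n) w)"
        unfolding xs_def T_def by (simp only: comp_op_pow_app)
      ultimately show "T (xs n) w - xs (Suc n) w = complex_of_real (- \<delta>) * (T ^^ Suc n) u0 w"
        unfolding T_def by (simp add: comp_op_pow_app algebra_simps del: funpow.simps)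
    qed
    have "H2_norm (\<lambda>w. complex_of_real (- \<delta>) * (T ^^ Suc n) u0 w) \<le> cmod (complex_of_real (- \<delta>)) * H2_norm ((T ^^ Suc n) u0)"
      by (rule H2_smult(2)[OF it])
    also have "H2_norm ((T ^^ Suc n) u0) = H2_norm u0" unfolding T_def \<phi>_def by (rule iso_iter[OF a b u0_H2])
    also have "cmod (complex_of_real (- \<delta>)) * H2_norm u0 \<le> \<delta>"
      using d u0_norm_le by (simp add: mult_left_le)
    finally show ?thesis unfolding H2_dist_def e .
  qed
  have sh: "\<exists>n. H2_dist ((T ^^ n) x) (xs n) > 1" if x: "x \<in> H2" for x
  proof -
    obtain n :: nat where n: "real n > (H2_norm x + 1) / (\<delta> * H2_norm u0)" using reals_Archimedean2 by blast
    have pos: "\<delta> * H2_norm u0 > 0" using d u0_norm_pos by simp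
    have "(H2_norm x + 1) / (\<delta> * H2_norm u0) > 0"
      using pos H2_norm_nonneg[of x] by (intro divide_pos_pos) auto
    then have "real n > 0" using n by linarith
    then have n0: "n > 0" by simp
    define g where "g = (\<lambda>w. x w - complex_of_real (real n * \<delta>) * u0 w)"
    have gH: "g \<in> H2" unfolding g_def by (intro H2_diff(1) x H2_smult(1) u0_H2)
    have e: "(\<lambda>w. (T ^^ n) x w - xs n w) = (T ^^ n) g"
      unfolding xs_def g_def T_def by (rule ext) (simp only: comp_op_pow_app)
    have e2: "(\<lambda>w. complex_of_real (real n * \<delta>) * u0 w) = (\<lambda>w. x w - g w)" unfolding g_def by simp
    have "real n * \<delta> * H2_norm u0 \<le> H2_norm (\<lambda>w. complex_of_real (real n * \<delta>) * u0 w)"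
      using H2_smult_ge[OF u0_H2, of "complex_of_real (real n * \<delta>)"] n0 d by (simp add: norm_mult)
    also have "\<dots> \<le> H2_norm x + H2_norm g" unfolding e2 by (rule H2_diff(2)[OF x gH])
    finally have A: "real n * \<delta> * H2_norm u0 \<le> H2_norm x + H2_norm g" .
    have B: "real n * (\<delta> * H2_norm u0) > H2_norm x + 1" using n pos by (simp add: pos_divide_less_eq)
    have "H2_norm g > 1" using A B by (simp add: mult.assoc)
    moreover have "H2_dist ((T ^^ n) x) (xs n) = H2_norm ((T ^^ n) g)"
      unfolding H2_dist_def e ..
    moreover have "H2_norm ((T ^^ n) g) = H2_norm g"
      unfolding T_def \<phi>_def by (rule iso_iter[OF a b gH])
    ultimately have "H2_dist ((T ^^ n) x) (xs n) > 1" by simp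
    then show ?thesis by blast
  qed
  show "\<exists>xs. (\<forall>n. xs n \<in> H2) \<and> (\<forall>n. H2_dist (comp_op (\<lambda>w. complex_of_real a * w + b) (xs n)) (xs (Suc n)) \<le> \<delta>) \<and>
              (\<forall>x\<in>H2. \<exists>n. H2_dist ((comp_op (\<lambda>w. complex_of_real a * w + b) ^^ n) x) (xs n) > 1)"
    using xsH ps sh unfolding T_def \<phi>_def by blast
qed

lemma iter_transl:
  assumes "a = 1"
  shows "((\<lambda>w. complex_of_real a * w + b) ^^ j) w = w + of_nat j * b"
  by (induction j) (auto simp: assms algebra_simps)

lemma re_inv_lb:
  fixes z :: complex and \<mu> Q j :: real
  assumes rz: "Re z \<ge> \<mu> * (1 + j)" and mu: "\<mu> > 0" and j: "j \<ge> 0"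
    and D: "(Re z)\<^sup>2 + (Im z)\<^sup>2 \<le> Q * (1 + j)\<^sup>2"
  shows "Re (inverse z) \<ge> \<mu> / (Q * (1 + j))"
proof -
  have "\<mu> * (1 + j) > 0" using mu j by simp
  then have rzp: "Re z > 0" using rz by linarith
  have Dp: "(Re z)\<^sup>2 + (Im z)\<^sup>2 > 0" using rzp by (simp add: add_pos_nonneg)
  have Qp: "Q * (1 + j)\<^sup>2 > 0" using D Dp by linarith
  have jp: "1 + j \<noteq> 0" using j by simp
  have "\<mu> * (1 + j) / (Q * (1 + j)\<^sup>2) = (\<mu> * (1 + j)) / ((Q * (1 + j)) * (1 + j))"
    by (simp add: power2_eq_square mult.assoc)
  also have "\<dots> = \<mu> / (Q * (1 + j))" by (rule nonzero_mult_divide_mult_cancel_right[OF jp])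
  finally have "\<mu> / (Q * (1 + j)) = \<mu> * (1 + j) / (Q * (1 + j)\<^sup>2)" by simp
  also have "\<dots> \<le> Re z / (Q * (1 + j)\<^sup>2)"
    using rz Qp by (intro divide_right_mono) auto
  also have "\<dots> \<le> Re z / ((Re z)\<^sup>2 + (Im z)\<^sup>2)"
    using rzp Dp D by (intro divide_left_mono) auto
  also have "\<dots> = Re (inverse z)" by simp
  finally show ?thesis .
qed

lemma u0_lb_transl:
  assumes b: "Re b > 0" and y: "0 \<le> y" "y \<le> 1"
  defines "B \<equiv> Re b + \<bar>Im b\<bar> + 1"
  shows "Re (u0 (Complex 1 y + of_nat j * b)) \<ge> min 2 (Re b) / (8 * B\<^sup>2 * (1 + real j))"
proof -
  define z where "z = Complex 1 y + of_nat j * b + 1"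
  have u: "u0 (Complex 1 y + of_nat j * b) = inverse z" unfolding u0_def z_def by (simp add: divide_inverse)
  have Rz: "Re z = 2 + real j * Re b" and Iz: "Im z = y + real j * Im b" by (simp_all add: z_def)
  have B1: "B \<ge> 1" "Re b \<le> B" "\<bar>Im b\<bar> \<le> B" unfolding B_def using b by auto
  have j0: "real j \<ge> 0" by simp
  have "min 2 (Re b) * (1 + real j) = min 2 (Re b) + real j * min 2 (Re b)" by (simp add: algebra_simps)
  also have "\<dots> \<le> 2 + real j * Re b" by (intro add_mono mult_left_mono) auto
  finally have r1: "Re z \<ge> min 2 (Re b) * (1 + real j)" unfolding Rz .
  have r2: "\<bar>Re z\<bar> \<le> 2 * B * (1 + real j)"
  proof -
    have "real j * Re b \<le> real j * B" using B1 by (intro mult_left_mono) auto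
    then have "Re z \<le> 2 + real j * B" unfolding Rz by simp
    moreover have "2 + real j * B \<le> 2 * B * (1 + real j)"
    proof -
      have "real j * B \<ge> 0" using B1 j0 by simp
      moreover have "2 * B * (1 + real j) = 2 * B + 2 * (real j * B)" by (simp add: algebra_simps)
      ultimately show ?thesis using B1 by linarith
    qed
    moreover have "Re z \<ge> 0" unfolding Rz using b by simp
    ultimately show ?thesis by simp
  qed
  have r3: "\<bar>Im z\<bar> \<le> 2 * B * (1 + real j)"
  proof -
    have t1: "\<bar>Im z\<bar> \<le> \<bar>y\<bar> + \<bar>real j * Im b\<bar>" unfolding Iz by (rule abs_triangle_ineq)
    have t2: "\<bar>real j * Im b\<bar> = real j * \<bar>Im b\<bar>" by (simp add: abs_mult)
    have t3: "real j * \<bar>Im b\<bar> \<le> real j * B" using B1 by (intro mult_left_mono) auto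
    have "\<bar>Im z\<bar> \<le> 1 + real j * B" using t1 t2 t3 y by linarith
    also have "\<dots> \<le> 2 * B * (1 + real j)"
    proof -
      have "real j * B \<ge> 0" using B1 j0 by simp
      moreover have "2 * B * (1 + real j) = 2 * B + 2 * (real j * B)" by (simp add: algebra_simps)
      ultimately show ?thesis using B1 by linarith
    qed
    finally show ?thesis .
  qed
  have "(Re z)\<^sup>2 + (Im z)\<^sup>2 \<le> (2 * B * (1 + real j))\<^sup>2 + (2 * B * (1 + real j))\<^sup>2"
  proof -
    have c0: "2 * B * (1 + real j) \<ge> 0" using B1 by simp
    have "(Re z)\<^sup>2 \<le> (2 * B * (1 + real j))\<^sup>2" using r2 c0 by (simp add: abs_le_square_iff[symmetric])
    moreover have "(Im z)\<^sup>2 \<le> (2 * B * (1 + real j))\<^sup>2" using r3 c0 by (simp add: abs_le_square_iff[symmetric])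
    ultimately show ?thesis by simp
  qed
  also have "\<dots> = (8 * B\<^sup>2) * (1 + real j)\<^sup>2" by (simp add: power2_eq_square algebra_simps)
  finally have r4: "(Re z)\<^sup>2 + (Im z)\<^sup>2 \<le> (8 * B\<^sup>2) * (1 + real j)\<^sup>2" .
  have "min 2 (Re b) / (8 * B\<^sup>2 * (1 + real j)) \<le> Re (inverse z)"
    by (rule re_inv_lb[OF r1 _ j0 r4]) (use b in auto)
  then show ?thesis unfolding u .
qed

lemma harm_sum: "(\<Sum>j<n. 1 / (1 + real j)) = harm n"
  by (induction n) (simp_all add: harm_Suc divide_inverse add.commute harm_def)

lemma ln_harm_big:
  fixes R :: real
  shows "\<exists>n. harm n > R"
proof -
  obtain n :: nat where n: "exp R \<le> real n" using real_arch_simple by blast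
  have "R = ln (exp R)" by simp
  also have "\<dots> < ln (real n + 1)"
    using n by (subst ln_less_cancel_iff) auto
  also have "\<dots> \<le> harm n" by (rule ln_le_harm)
  finally show ?thesis by blast
qed

theorem case_parabolic_nonaut:
  assumes a: "a = 1" and b: "Re b > 0"
  shows "\<not> positive_shadowing H2 H2_dist (comp_op (\<lambda>w. complex_of_real a * w + b))"
proof (rule no_shadow_generic)
  fix \<delta> :: real assume d: "\<delta> > 0"
  have a0: "a > 0" and b': "Re b \<ge> 0" using a b by auto
  define \<phi> where "\<phi> = (\<lambda>w. complex_of_real a * w + b)"
  define T where "T = comp_op \<phi>"
  define xs where "xs = (\<lambda>n w. complex_of_real \<delta> * Ssum \<phi> n w)"
  have xsH: "\<forall>n. xs n \<in> H2" and ps: "\<forall>n. H2_dist (T (xs n)) (xs (Suc n)) \<le> \<delta>"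
    using Ssum_pseudo_all[OF a0 b' d] unfolding xs_def T_def \<phi>_def by auto
  define B where "B = Re b + \<bar>Im b\<bar> + 1"
  define m where "m = min 2 (Re b) / (8 * B\<^sup>2)"
  have B1: "B \<ge> 1" unfolding B_def using b by simp
  have m0: "m > 0" unfolding m_def using b B1 by simp
  have lowS: "Re (Ssum \<phi> n (Complex 1 y)) \<ge> m * harm n" if y: "0 \<le> y" "y \<le> 1" for n y
  proof -
    have "Re (Ssum \<phi> n (Complex 1 y)) = (\<Sum>j<n. Re (u0 (Complex 1 y + of_nat j * b)))"
      unfolding Ssum_def \<phi>_def by (simp add: iter_transl[OF a] Re_sum)
    also have "\<dots> \<ge> (\<Sum>j<n. m * (1 / (1 + real j)))"
    proof (intro sum_mono)
      fix j assume "j \<in> {..<n}"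
      have "min 2 (Re b) / (8 * B\<^sup>2 * (1 + real j)) \<le> Re (u0 (Complex 1 y + of_nat j * b))"
        using u0_lb_transl[OF b y, of j] unfolding B_def by simp
      moreover have "m * (1 / (1 + real j)) = min 2 (Re b) / (8 * B\<^sup>2 * (1 + real j))"
        unfolding m_def by simp
      ultimately show "m * (1 / (1 + real j)) \<le> Re (u0 (Complex 1 y + of_nat j * b))" by simp
    qed
    also have "(\<Sum>j<n. m * (1 / (1 + real j))) = m * harm n"
      by (simp only: sum_distrib_left[symmetric] harm_sum)
    finally show ?thesis .
  qed
  have lowx: "\<delta> * m * harm n \<le> cmod (xs n (Complex 1 y))" if y: "0 \<le> y" "y \<le> 1" for n y
  proof -
    have "\<delta> * m * harm n \<le> \<delta> * Re (Ssum \<phi> n (Complex 1 y))"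
      using lowS[OF y, of n] d by (simp add: mult.assoc)
    also have "\<dots> = Re (xs n (Complex 1 y))" by (simp add: xs_def)
    also have "\<dots> \<le> cmod (xs n (Complex 1 y))" by (rule complex_Re_le_cmod)
    finally show ?thesis .
  qed
  have sh: "\<exists>n. H2_dist ((T ^^ n) x) (xs n) > 1" if x: "x \<in> H2" for x
  proof -
    define R where "R = (H2_norm x + 1) * sqrt pi / (\<delta> * m)"
    obtain n where n: "harm n > R" using ln_harm_big by blast
    define fx where "fx = (T ^^ n) x"
    have fxH: "fx \<in> H2" unfolding fx_def T_def \<phi>_def by (rule H2_iter[OF a0 b' x])
    define g where "g = (\<lambda>w. fx w - xs n w)"
    have gH: "g \<in> H2" unfolding g_def using fxH xsH by (intro H2_diff(1)) auto
    have e: "xs n = (\<lambda>w. fx w - g w)" unfolding g_def by simp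
    have "H2_norm (xs n) \<le> H2_norm fx + H2_norm g" unfolding e by (rule H2_diff(2)[OF fxH gH])
    also have "H2_norm fx \<le> H2_norm x" unfolding fx_def T_def \<phi>_def by (rule N_iter_le[OF a b' x])
    finally have up: "H2_norm (xs n) \<le> H2_norm x + H2_norm g" by simp
    have K0: "\<delta> * m * harm n \<ge> 0" using d m0 by (simp add: harm_nonneg)
    have "sqrt ((1 - 0) * (\<delta> * m * harm n)\<^sup>2 / pi) \<le> H2_norm (xs n)"
      by (rule seg_lower[of "xs n" 1 0 1 "\<delta> * m * harm n"]) (use xsH K0 lowx in \<open>auto simp: H2_def\<close>)
    moreover have "sqrt ((1 - 0) * (\<delta> * m * harm n)\<^sup>2 / pi) = \<delta> * m * harm n / sqrt pi"
      using K0 by (simp add: real_sqrt_divide)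
    ultimately have lo: "\<delta> * m * harm n / sqrt pi \<le> H2_norm (xs n)" by simp
    have "\<delta> * m * R < \<delta> * m * harm n" using n d m0 by simp
    moreover have "\<delta> * m * R = (H2_norm x + 1) * sqrt pi" unfolding R_def using d m0 by simp
    ultimately have "(H2_norm x + 1) * sqrt pi < \<delta> * m * harm n" by simp
    then have "H2_norm x + 1 < \<delta> * m * harm n / sqrt pi" by (simp add: pos_less_divide_eq)
    then have "H2_norm g > 1" using lo up by linarith
    then have "H2_dist ((T ^^ n) x) (xs n) > 1" unfolding H2_dist_def g_def fx_def by simp
    then show ?thesis by blast
  qed
  show "\<exists>xs. (\<forall>n. xs n \<in> H2) \<and> (\<forall>n. H2_dist (comp_op (\<lambda>w. complex_of_real a * w + b) (xs n)) (xs (Suc n)) \<le> \<delta>) \<and>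
              (\<forall>x\<in>H2. \<exists>n. H2_dist ((comp_op (\<lambda>w. complex_of_real a * w + b) ^^ n) x) (xs n) > 1)"
    using xsH ps sh unfolding T_def \<phi>_def by blast
qed

theorem case_hyp_typeI:
  assumes a: "0 < a" "a < 1" and b: "Re b > 0"
  shows "\<not> positive_shadowing H2 H2_dist (comp_op (\<lambda>w. complex_of_real a * w + b))"
proof (rule no_shadow_generic)
  fix \<delta> :: real assume d: "\<delta> > 0"
  have a0: "a > 0" and b': "Re b \<ge> 0" using a b by auto
  define \<phi> where "\<phi> = (\<lambda>w. complex_of_real a * w + b)"
  define T where "T = comp_op \<phi>"
  define xs where "xs = (\<lambda>n w. complex_of_real \<delta> * Ssum \<phi> n w)"
  have xsH: "\<forall>n. xs n \<in> H2" and ps: "\<forall>n. H2_dist (T (xs n)) (xs (Suc n)) \<le> \<delta>"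
    using Ssum_pseudo_all[OF a0 b' d] unfolding xs_def T_def \<phi>_def by auto
  define ws where "ws = b / complex_of_real (1 - a)"
  have nz: "complex_of_real (1 - a) \<noteq> 0" using a by simp
  have fix_eq: "\<phi> w - ws = complex_of_real a * (w - ws)" for w
  proof -
    have "b = complex_of_real (1 - a) * ws" unfolding ws_def using nz by simp
    then show ?thesis unfolding \<phi>_def by (simp add: algebra_simps)
  qed
  have Rws: "Re ws = Re b / (1 - a)" unfolding ws_def by (simp add: Re_divide_of_real)
  define \<rho> where "\<rho> = Re ws / 2"
  have rho: "\<rho> > 0" unfolding \<rho>_def Rws using a b by simp
  define D where "D = cball ws \<rho>"
  have phiD: "\<phi> w \<in> D" if "w \<in> D" for w
  proof -
    have "cmod (\<phi> w - ws) = a * cmod (w - ws)" unfolding fix_eq using a0 by (simp add: norm_mult)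
    also have "\<dots> \<le> cmod (w - ws)" using a that by (simp add: mult_left_le_one_le)
    finally show ?thesis using that unfolding D_def by (simp add: dist_norm norm_minus_commute)
  qed
  have iterD: "(\<phi> ^^ n) w \<in> D" if "w \<in> D" for w n
    by (induction n) (use that phiD in auto)
  have Dre: "Re w \<ge> \<rho>" if "w \<in> D" for w
  proof -
    have "cmod (w - ws) \<le> \<rho>" using that unfolding D_def by (simp add: dist_norm norm_minus_commute)
    moreover have "Re ws - Re w \<le> cmod (w - ws)"
      using abs_Re_le_cmod[of "w - ws"] by simp
    ultimately show ?thesis unfolding \<rho>_def by simp
  qed
  have Drhp: "D \<subseteq> rhp" using Dre rho unfolding rhp_def by force
  define m where "m = 1 / (cmod ws + \<rho> + 1)\<^sup>2"
  have "cmod ws + \<rho> + 1 > 0" using rho norm_ge_zero[of ws] by linarith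
  then have m0: "m > 0" unfolding m_def by simp
  have u0D: "Re (u0 w) \<ge> m" if w: "w \<in> D" for w
  proof -
    have R1: "Re (w + 1) \<ge> 1" using Dre[OF w] rho by simp
    have n1: "cmod (w + 1) \<le> cmod ws + \<rho> + 1"
    proof -
      have "cmod w \<le> cmod ws + cmod (w - ws)" by (metis add.commute diff_add_cancel norm_triangle_ineq)
      moreover have "cmod (w - ws) \<le> \<rho>" using w unfolding D_def by (simp add: dist_norm norm_minus_commute)
      moreover have "cmod (w + 1) \<le> cmod w + 1" by (metis norm_one norm_triangle_ineq)
      ultimately show ?thesis by linarith
    qed
    have p: "cmod (w + 1) > 0" using R1 by (metis complex_Re_le_cmod less_le_trans zero_less_one)
    have "m \<le> 1 / (cmod (w + 1))\<^sup>2" unfolding m_def using p n1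
      by (intro divide_left_mono power_mono mult_pos_pos) auto
    also have "\<dots> \<le> Re (w + 1) / (cmod (w + 1))\<^sup>2" using R1 p by (intro divide_right_mono) auto
    also have "\<dots> = Re (u0 w)" unfolding u0_def by (simp add: Re_divide')
    finally show ?thesis .
  qed
  have lowx: "\<delta> * (real n * m) \<le> cmod (xs n w)" if w: "w \<in> D" for n w
  proof -
    have "real n * m = (\<Sum>j<n. m)" by simp
    also have "\<dots> \<le> (\<Sum>j<n. Re (u0 ((\<phi> ^^ j) w)))" by (intro sum_mono u0D iterD w)
    also have "\<dots> = Re (Ssum \<phi> n w)" unfolding Ssum_def by (simp add: Re_sum)
    finally have "\<delta> * (real n * m) \<le> \<delta> * Re (Ssum \<phi> n w)" using d by simp
    also have "\<dots> = Re (xs n w)" by (simp add: xs_def)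
    also have "\<dots> \<le> cmod (xs n w)" by (rule complex_Re_le_cmod)
    finally show ?thesis .
  qed
  have sh: "\<exists>n. H2_dist ((T ^^ n) x) (xs n) > 1" if x: "x \<in> H2" for x
  proof -
    have "continuous_on rhp x" using x holomorphic_on_imp_continuous_on by (auto simp: H2_def)
    then have "continuous_on D x" using Drhp continuous_on_subset by blast
    then have "bounded (x ` D)" unfolding D_def by (intro compact_imp_bounded compact_continuous_image) auto
    then obtain M where M: "M > 0" "\<And>w. w \<in> D \<Longrightarrow> cmod (x w) \<le> M" unfolding bounded_pos by auto
    define C where "C = sqrt (pi / (2 * \<rho>))"
    obtain n :: nat where n: "real n > (M + C) / (\<delta> * m)" using reals_Archimedean2 by blast
    have dm: "\<delta> * m > 0" using d m0 by simp
    define K where "K = \<delta> * (real n * m) - M"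
    have KC: "K > C" using n dm unfolding K_def by (simp add: pos_divide_less_eq algebra_simps)
    have C0: "C \<ge> 0" unfolding C_def using rho by simp
    define g where "g = (\<lambda>w. (T ^^ n) x w - xs n w)"
    have gH: "g \<in> H2" unfolding g_def T_def \<phi>_def using xsH by (intro H2_diff(1) H2_iter[OF a0 b' x]) auto
    have lowg: "K \<le> cmod (g (Complex (Re ws) y))" if y: "Im ws - \<rho> \<le> y" "y \<le> Im ws + \<rho>" for y
    proof -
      let ?w = "Complex (Re ws) y"
      have "cmod (?w - ws) = \<bar>y - Im ws\<bar>" by (simp add: cmod_def)
      then have wD: "?w \<in> D" unfolding D_def using y by (simp add: dist_norm norm_minus_commute abs_le_iff)
      have "cmod (g ?w) = cmod (x ((\<phi> ^^ n) ?w) - xs n ?w)" unfolding g_def T_def by (simp add: comp_op_pow_app)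
      moreover have "cmod (x ((\<phi> ^^ n) ?w)) \<le> M" by (rule M(2)[OF iterD[OF wD]])
      moreover have "\<delta> * (real n * m) \<le> cmod (xs n ?w)" by (rule lowx[OF wD])
      moreover have "cmod (xs n ?w) - cmod (x ((\<phi> ^^ n) ?w)) \<le> cmod (x ((\<phi> ^^ n) ?w) - xs n ?w)"
        by (metis norm_minus_commute norm_triangle_ineq2)
      ultimately show ?thesis unfolding K_def by linarith
    qed
    have "sqrt ((Im ws + \<rho> - (Im ws - \<rho>)) * K\<^sup>2 / pi) \<le> H2_norm g"
      by (rule seg_lower[of g "Re ws" "Im ws - \<rho>" "Im ws + \<rho>" K, OF _ _ _ _ lowg]) (use gH rho KC C0 in \<open>auto simp: H2_def Rws[symmetric] \<rho>_def\<close>)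
    moreover have "1 < sqrt ((Im ws + \<rho> - (Im ws - \<rho>)) * K\<^sup>2 / pi)"
    proof -
      have "C\<^sup>2 < K\<^sup>2" using KC C0 by (intro power_strict_mono) auto
      moreover have "C\<^sup>2 = pi / (2 * \<rho>)" unfolding C_def using rho by (simp add: less_imp_le)
      ultimately have "pi < 2 * \<rho> * K\<^sup>2" using rho by (simp add: pos_divide_less_eq mult.commute)
      then have "1 < (Im ws + \<rho> - (Im ws - \<rho>)) * K\<^sup>2 / pi" by (simp add: pos_less_divide_eq)
      then show ?thesis by simp
    qed
    ultimately have "1 < H2_norm g" by linarith
    then have "H2_dist ((T ^^ n) x) (xs n) > 1" unfolding H2_dist_def g_def by simp
    then show ?thesis by blast
  qed
  show "\<exists>xs. (\<forall>n. xs n \<in> H2) \<and> (\<forall>n. H2_dist (comp_op (\<lambda>w. complex_of_real a * w + b) (xs n)) (xs (Suc n)) \<le> \<delta>) \<and>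
              (\<forall>x\<in>H2. \<exists>n. H2_dist ((comp_op (\<lambda>w. complex_of_real a * w + b) ^^ n) x) (xs n) > 1)"
    using xsH ps sh unfolding T_def \<phi>_def by blast
qed

lemma cont_aff_line:
  assumes hol: "f holomorphic_on rhp" and x: "x > 0"
  shows "continuous_on UNIV (\<lambda>t. f (Complex x (\<alpha> + \<beta> * t)))"
proof -
  have "continuous_on UNIV (\<lambda>t::real. \<alpha> + \<beta> * t)" by (intro continuous_intros)
  from continuous_on_compose2[OF cont_line[OF hol x] this] show ?thesis by auto
qed

lemma line_sq_int:
  assumes hol: "f holomorphic_on rhp" and hb: "hb f H" and H: "H \<ge> 0" and x: "x > 0" and \<beta>: "\<beta> \<noteq> 0"
  shows "integral {0..1} (\<lambda>t. (cmod (f (Complex x (\<alpha> + \<beta> * t))))\<^sup>2) \<le> H / \<bar>\<beta>\<bar>"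
proof -
  define h where "h = (\<lambda>t. (cmod (f (Complex x (\<alpha> + \<beta> * t))))\<^sup>2)"
  have hc: "continuous_on UNIV h" unfolding h_def
    by (intro continuous_intros continuous_on_compose2[OF continuous_on_norm_id cont_aff_line[OF hol x]]) auto
  have hi: "(h has_integral integral {0..1} h) {0..1}"
    by (intro integrable_integral integrable_continuous_interval continuous_on_subset[OF hc]) auto
  have "ennreal (integral {0..1} h) = (\<integral>\<^sup>+t. ennreal (h t) * indicator {0..1} t \<partial>lborel)"
    by (rule nn_integral_has_integral_lebesgue'[OF _ hi, symmetric]) (simp add: h_def)
  also have "\<dots> \<le> (\<integral>\<^sup>+t. ennreal (h t) \<partial>lborel)"
    by (intro nn_integral_mono) (auto simp: indicator_def)
  finally have A: "ennreal (integral {0..1} h) \<le> (\<integral>\<^sup>+t. ennreal (h t) \<partial>lborel)" .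
  define F where "F = (\<lambda>y. ennreal ((cmod (f (Complex x y)))\<^sup>2))"
  have Fm: "F \<in> borel_measurable borel" unfolding F_def by (rule meas_line[OF hol x])
  have "lin f x = ennreal \<bar>\<beta>\<bar> * (\<integral>\<^sup>+t. F (\<alpha> + \<beta> * t) \<partial>lborel)"
    unfolding lin_def using nn_integral_real_affine[OF Fm \<beta>, of \<alpha>] by (simp add: F_def)
  also have "(\<integral>\<^sup>+t. F (\<alpha> + \<beta> * t) \<partial>lborel) = (\<integral>\<^sup>+t. ennreal (h t) \<partial>lborel)"
    by (simp add: F_def h_def)
  finally have B: "ennreal \<bar>\<beta>\<bar> * (\<integral>\<^sup>+t. ennreal (h t) \<partial>lborel) \<le> ennreal H"
    using hb x unfolding hb_def by metis
  have "(\<integral>\<^sup>+t. ennreal (h t) \<partial>lborel) = ennreal (1 / \<bar>\<beta>\<bar>) * (ennreal \<bar>\<beta>\<bar> * (\<integral>\<^sup>+t. ennreal (h t) \<partial>lborel))"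
    using \<beta> by (simp add: mult.assoc[symmetric] ennreal_mult[symmetric])
  also have "\<dots> \<le> ennreal (1 / \<bar>\<beta>\<bar>) * ennreal H" by (intro mult_left_mono B) auto
  also have "\<dots> = ennreal (H / \<bar>\<beta>\<bar>)" using H by (simp add: ennreal_mult[symmetric])
  finally have "ennreal (integral {0..1} h) \<le> ennreal (H / \<bar>\<beta>\<bar>)" using A by (meson order_trans)
  then show ?thesis unfolding h_def using H by (simp add: ennreal_le_iff)
qed

lemma line_int:
  assumes hol: "f holomorphic_on rhp" and hb: "hb f H" and H: "H \<ge> 0" and x: "x > 0" and \<beta>: "\<beta> \<noteq> 0"
    and \<tau>: "\<tau> > 0"
  shows "integral {0..1} (\<lambda>t. cmod (f (Complex x (\<alpha> + \<beta> * t)))) \<le> \<tau> * H / (2 * \<bar>\<beta>\<bar>) + 1 / (2 * \<tau>)"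
proof -
  define c where "c = (\<lambda>t. cmod (f (Complex x (\<alpha> + \<beta> * t))))"
  have cc: "continuous_on UNIV c" unfolding c_def
    by (intro continuous_on_compose2[OF continuous_on_norm_id cont_aff_line[OF hol x]]) auto
  have ci: "c integrable_on {0..1}" by (intro integrable_continuous_interval continuous_on_subset[OF cc]) auto
  have c2i: "(\<lambda>t. (c t)\<^sup>2) integrable_on {0..1}"
    by (intro integrable_continuous_interval continuous_intros continuous_on_subset[OF cc]) auto
  have pw: "c t \<le> \<tau> / 2 * (c t)\<^sup>2 + 1 / (2 * \<tau>)" for t
  proof -
    have "0 \<le> (\<tau> * c t - 1)\<^sup>2" by simp
    then have "2 * \<tau> * c t \<le> \<tau>\<^sup>2 * (c t)\<^sup>2 + 1" by (simp add: power2_eq_square algebra_simps)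
    then have "2 * \<tau> * c t \<le> 2 * \<tau> * (\<tau> / 2 * (c t)\<^sup>2 + 1 / (2 * \<tau>))"
      using \<tau> by (simp add: power2_eq_square algebra_simps)
    then show ?thesis using \<tau> by simp
  qed
  have c3i: "(\<lambda>t. \<tau> / 2 * (c t)\<^sup>2) integrable_on {0..1}"
    by (intro integrable_continuous_interval continuous_intros continuous_on_subset[OF cc]) auto
  have c4i: "(\<lambda>t. \<tau> / 2 * (c t)\<^sup>2 + 1 / (2 * \<tau>)) integrable_on {0..1}"
    by (intro integrable_continuous_interval continuous_intros continuous_on_subset[OF cc]) auto
  have "integral {0..1} c \<le> integral {0..1} (\<lambda>t. \<tau> / 2 * (c t)\<^sup>2 + 1 / (2 * \<tau>))"
    by (intro integral_le ci c4i pw)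
  also have "\<dots> = integral {0..1} (\<lambda>t. \<tau> / 2 * (c t)\<^sup>2) + integral {0..1} (\<lambda>t::real. 1 / (2 * \<tau>))"
    by (rule integral_add[OF c3i integrable_const_ivl[of "1 / (2 * \<tau>)" "0::real" 1]])
  also have "\<dots> = \<tau> / 2 * integral {0..1} (\<lambda>t. (c t)\<^sup>2) + 1 / (2 * \<tau>)"
    by simp
  also have "integral {0..1} (\<lambda>t. (c t)\<^sup>2) \<le> H / \<bar>\<beta>\<bar>" unfolding c_def by (rule line_sq_int[OF hol hb H x \<beta>])
  then have "\<tau> / 2 * integral {0..1} (\<lambda>t. (c t)\<^sup>2) \<le> \<tau> / 2 * (H / \<bar>\<beta>\<bar>)" using \<tau> by (intro mult_left_mono) auto
  finally show ?thesis unfolding c_def by (simp add: field_simps)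
qed

lemma linepath_Complex:
  "linepath (Complex p1 p2) (Complex q1 q2) t = Complex (p1 + (q1 - p1) * t) (p2 + (q2 - p2) * t)"
  by (simp add: linepath_def complex_eq_iff algebra_simps)

lemma seg_bound:
  assumes I: "((\<lambda>w. f w / (w - w0)) has_contour_integral I) (linepath p q)"
    and cf: "continuous_on (closed_segment p q) f"
    and rho: "\<rho> > 0" "\<And>t. t \<in> {0..1} \<Longrightarrow> \<rho> \<le> cmod (linepath p q t - w0)"
  shows "cmod I \<le> cmod (q - p) / \<rho> * integral {0..1} (\<lambda>t. cmod (f (linepath p q t)))"
proof -
  have hi: "((\<lambda>t. f (linepath p q t) / (linepath p q t - w0) * (q - p)) has_integral I) {0..1}"
    using I by (simp add: has_contour_integral_linepath)
  have cl: "continuous_on {0..1} (\<lambda>t. f (linepath p q t))"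
    by (rule continuous_on_compose2[OF cf continuous_on_linepath]) (auto simp: linepath_image_01)
  have gi: "(\<lambda>t. cmod (q - p) / \<rho> * cmod (f (linepath p q t))) integrable_on {0..1}"
    by (intro integrable_continuous_interval continuous_intros cl)
  have "cmod I = norm (integral {0..1} (\<lambda>t. f (linepath p q t) / (linepath p q t - w0) * (q - p)))"
    using integral_unique[OF hi] by simp
  also have "\<dots> \<le> integral {0..1} (\<lambda>t. cmod (q - p) / \<rho> * cmod (f (linepath p q t)))"
  proof (rule integral_norm_bound_integral)
    show "(\<lambda>t. f (linepath p q t) / (linepath p q t - w0) * (q - p)) integrable_on {0..1}"
      using hi by blast
    show "(\<lambda>t. cmod (q - p) / \<rho> * cmod (f (linepath p q t))) integrable_on {0..1}" by (rule gi)
    fix t :: real assume t: "t \<in> {0..1}"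
    have d: "\<rho> \<le> cmod (linepath p q t - w0)" by (rule rho(2)[OF t])
    have "norm (f (linepath p q t) / (linepath p q t - w0) * (q - p))
        = cmod (f (linepath p q t)) * cmod (q - p) / cmod (linepath p q t - w0)"
      by (simp add: norm_mult norm_divide)
    also have "\<dots> \<le> cmod (f (linepath p q t)) * cmod (q - p) / \<rho>"
      using d rho(1) by (intro divide_left_mono mult_pos_pos) auto
    finally show "norm (f (linepath p q t) / (linepath p q t - w0) * (q - p))
        \<le> cmod (q - p) / \<rho> * cmod (f (linepath p q t))" by (simp add: field_simps)
  qed
  also have "\<dots> = cmod (q - p) / \<rho> * integral {0..1} (\<lambda>t. cmod (f (linepath p q t)))"
    by simp
  finally show ?thesis .
qed

lemma integral_nonneg_any:
  fixes f :: "real \<Rightarrow> real"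
  assumes "\<And>x. x \<in> S \<Longrightarrow> 0 \<le> f x"
  shows "0 \<le> integral S f"
  by (cases "f integrable_on S") (use assms in \<open>auto intro: integral_nonneg simp: not_integrable_integral\<close>)

lemma sqrt_4sq: "sqrt (4 * (x::real)\<^sup>2) = 2 * \<bar>x\<bar>"
proof -
  have "4 * x\<^sup>2 = (2 * x)\<^sup>2" by (simp add: power2_eq_square)
  then have "sqrt (4 * x\<^sup>2) = sqrt ((2 * x)\<^sup>2)" by simp
  also have "\<dots> = \<bar>2 * x\<bar>" by (rule real_sqrt_abs)
  finally show ?thesis by (simp add: abs_mult)
qed

lemma cauchy_rect:
  assumes hol: "f holomorphic_on rhp" and r: "r > 0" "x0 > r" and L: "r \<le> L" "L \<le> 2 * r"
  shows "2 * pi * cmod (f (Complex x0 y0)) \<le>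
     2 * (integral {0..1} (\<lambda>t. cmod (f (Complex (x0 - r + 2 * r * t) (y0 - L))))
        + integral {0..1} (\<lambda>t. cmod (f (Complex (x0 + r - 2 * r * t) (y0 + L)))))
   + 4 * (integral {0..1} (\<lambda>t. cmod (f (Complex (x0 + r) (y0 - L + 2 * L * t))))
        + integral {0..1} (\<lambda>t. cmod (f (Complex (x0 - r) (y0 + L + - (2 * L) * t)))))"
proof -
  define w0 where "w0 = Complex x0 y0"
  define a1 where "a1 = Complex (x0 - r) (y0 - L)"
  define a2 where "a2 = Complex (x0 + r) (y0 - L)"
  define a3 where "a3 = Complex (x0 + r) (y0 + L)"
  define a4 where "a4 = Complex (x0 - r) (y0 + L)"
  define g where "g = (\<lambda>w. f w / (w - w0))"
  have L0: "L > 0" using r L by simp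
  have rect: "rectpath a1 a3 = linepath a1 a2 +++ linepath a2 a3 +++ linepath a3 a4 +++ linepath a4 a1"
    by (simp add: rectpath_def Let_def a1_def a2_def a3_def a4_def)
  have pim: "path_image (rectpath a1 a3) = closed_segment a1 a2 \<union> closed_segment a2 a3 \<union> closed_segment a3 a4 \<union> closed_segment a4 a1"
    unfolding rect by (simp add: path_image_join Un_assoc)
  have pim2: "path_image (rectpath a1 a3) \<subseteq> rhp - {w0}"
  proof
    fix z assume z: "z \<in> path_image (rectpath a1 a3)"
    have "Re a1 \<le> Re a3" "Im a1 \<le> Im a3" using r L0 by (auto simp: a1_def a3_def)
    from z[unfolded path_image_rectpath[OF this]]
    show "z \<in> rhp - {w0}" using r L0
      by (auto simp: a1_def a3_def w0_def rhp_def complex_eq_iff)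
  qed
  have cf: "continuous_on rhp f" by (rule holomorphic_on_imp_continuous_on[OF hol])
  have cg: "continuous_on (rhp - {w0}) g" unfolding g_def
    by (intro continuous_intros continuous_on_subset[OF cf]) auto
  have cseg: "continuous_on (closed_segment p q) g" "continuous_on (closed_segment p q) f"
    if "closed_segment p q \<subseteq> path_image (rectpath a1 a3)" for p q
    using that pim2 by (auto intro: continuous_on_subset[OF cg] continuous_on_subset[OF cf])
  have s1: "closed_segment a1 a2 \<subseteq> path_image (rectpath a1 a3)"
    and s2: "closed_segment a2 a3 \<subseteq> path_image (rectpath a1 a3)"
    and s3: "closed_segment a3 a4 \<subseteq> path_image (rectpath a1 a3)"
    and s4: "closed_segment a4 a1 \<subseteq> path_image (rectpath a1 a3)"
    unfolding pim by auto
  obtain I1 where I1: "(g has_contour_integral I1) (linepath a1 a2)"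
    using contour_integrable_continuous_linepath[OF cseg(1)[OF s1]] by (auto simp: contour_integrable_on_def)
  obtain I2 where I2: "(g has_contour_integral I2) (linepath a2 a3)"
    using contour_integrable_continuous_linepath[OF cseg(1)[OF s2]] by (auto simp: contour_integrable_on_def)
  obtain I3 where I3: "(g has_contour_integral I3) (linepath a3 a4)"
    using contour_integrable_continuous_linepath[OF cseg(1)[OF s3]] by (auto simp: contour_integrable_on_def)
  obtain I4 where I4: "(g has_contour_integral I4) (linepath a4 a1)"
    using contour_integrable_continuous_linepath[OF cseg(1)[OF s4]] by (auto simp: contour_integrable_on_def)
  have J: "(g has_contour_integral (I1 + (I2 + (I3 + I4)))) (rectpath a1 a3)"
    unfolding rect
    by (intro has_contour_integral_join I1 I2 I3 I4 valid_path_join valid_path_linepath) auto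
  have w0in: "w0 \<in> box a1 a3" using r L0 by (auto simp: in_box_complex_iff a1_def a3_def w0_def)
  have wn: "winding_number (rectpath a1 a3) w0 = 1" by (rule winding_number_rectpath[OF w0in])
  have C: "(g has_contour_integral (2 * pi * \<i> * winding_number (rectpath a1 a3) w0 * f w0)) (rectpath a1 a3)"
    unfolding g_def
  proof (rule Cauchy_integral_formula_weak[OF convex_rhp finite.emptyI cf])
    show "\<And>x. x \<in> interior rhp - {} \<Longrightarrow> f field_differentiable at x"
      using hol open_rhp by (auto simp: interior_open holomorphic_on_imp_differentiable_at)
    show "w0 \<in> interior rhp - {}" using r by (simp add: interior_open[OF open_rhp] w0_def)
    show "path_image (rectpath a1 a3) \<subseteq> rhp - {w0}" by (rule pim2)
  qed auto
  have eq: "2 * pi * \<i> * f w0 = I1 + (I2 + (I3 + I4))"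
    using has_contour_integral_unique[OF C J] wn by simp
  have "2 * pi * cmod (f w0) = cmod (2 * pi * \<i> * f w0)" by (simp add: norm_mult)
  also have "\<dots> \<le> cmod I1 + cmod I2 + cmod I3 + cmod I4" unfolding eq
  proof -
    have "cmod (I1 + (I2 + (I3 + I4))) \<le> cmod I1 + cmod (I2 + (I3 + I4))" by (rule norm_triangle_ineq)
    moreover have "cmod (I2 + (I3 + I4)) \<le> cmod I2 + cmod (I3 + I4)" by (rule norm_triangle_ineq)
    moreover have "cmod (I3 + I4) \<le> cmod I3 + cmod I4" by (rule norm_triangle_ineq)
    ultimately show "cmod (I1 + (I2 + (I3 + I4))) \<le> cmod I1 + cmod I2 + cmod I3 + cmod I4" by linarith
  qed
  finally have tot: "2 * pi * cmod (f w0) \<le> cmod I1 + cmod I2 + cmod I3 + cmod I4" .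
  define J1 where "J1 = integral {0..1} (\<lambda>t. cmod (f (Complex (x0 - r + 2 * r * t) (y0 - L))))"
  define J2 where "J2 = integral {0..1} (\<lambda>t. cmod (f (Complex (x0 + r) (y0 - L + 2 * L * t))))"
  define J3 where "J3 = integral {0..1} (\<lambda>t. cmod (f (Complex (x0 + r - 2 * r * t) (y0 + L))))"
  define J4 where "J4 = integral {0..1} (\<lambda>t. cmod (f (Complex (x0 - r) (y0 + L + - (2 * L) * t))))"
  have J1n: "J1 \<ge> 0" and J2n: "J2 \<ge> 0" and J3n: "J3 \<ge> 0" and J4n: "J4 \<ge> 0"
    unfolding J1_def J2_def J3_def J4_def by (auto intro!: integral_nonneg_any)
  have l1: "linepath a1 a2 t = Complex (x0 - r + 2 * r * t) (y0 - L)" for t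
    unfolding a1_def a2_def linepath_Complex by (simp add: algebra_simps)
  have l2: "linepath a2 a3 t = Complex (x0 + r) (y0 - L + 2 * L * t)" for t
    unfolding a2_def a3_def linepath_Complex by (simp add: algebra_simps)
  have l3: "linepath a3 a4 t = Complex (x0 + r - 2 * r * t) (y0 + L)" for t
    unfolding a3_def a4_def linepath_Complex by (simp add: algebra_simps)
  have l4: "linepath a4 a1 t = Complex (x0 - r) (y0 + L + - (2 * L) * t)" for t
    unfolding a4_def a1_def linepath_Complex by (simp add: algebra_simps)
  have b1: "cmod I1 \<le> 2 * J1"
  proof -
    have "cmod I1 \<le> cmod (a2 - a1) / L * J1"
      unfolding J1_def l1[symmetric]
    proof (rule seg_bound[OF I1[unfolded g_def] cseg(2)[OF s1] L0])
      fix t :: real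
      have "L = \<bar>Im (linepath a1 a2 t - w0)\<bar>" unfolding l1 w0_def using L0 by simp
      then show "L \<le> cmod (linepath a1 a2 t - w0)" using abs_Im_le_cmod by metis
    qed
    also have "cmod (a2 - a1) = 2 * r" using r by (simp add: a1_def a2_def cmod_def sqrt_4sq)
    also have "2 * r / L * J1 \<le> 2 * J1" using J1n L r L0 by (intro mult_right_mono) (auto simp: divide_le_eq)
    finally show ?thesis .
  qed
  have b3: "cmod I3 \<le> 2 * J3"
  proof -
    have "cmod I3 \<le> cmod (a4 - a3) / L * J3"
      unfolding J3_def l3[symmetric]
    proof (rule seg_bound[OF I3[unfolded g_def] cseg(2)[OF s3] L0])
      fix t :: real
      have "L = \<bar>Im (linepath a3 a4 t - w0)\<bar>" unfolding l3 w0_def using L0 by simp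
      then show "L \<le> cmod (linepath a3 a4 t - w0)" using abs_Im_le_cmod by metis
    qed
    also have "cmod (a4 - a3) = 2 * r" using r by (simp add: a3_def a4_def cmod_def sqrt_4sq)
    also have "2 * r / L * J3 \<le> 2 * J3" using J3n L r L0 by (intro mult_right_mono) (auto simp: divide_le_eq)
    finally show ?thesis .
  qed
  have b2: "cmod I2 \<le> 4 * J2"
  proof -
    have "cmod I2 \<le> cmod (a3 - a2) / r * J2"
      unfolding J2_def l2[symmetric]
    proof (rule seg_bound[OF I2[unfolded g_def] cseg(2)[OF s2] r(1)])
      fix t :: real
      have "r = \<bar>Re (linepath a2 a3 t - w0)\<bar>" unfolding l2 w0_def using r by simp
      then show "r \<le> cmod (linepath a2 a3 t - w0)" using abs_Re_le_cmod by metis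
    qed
    also have "cmod (a3 - a2) = 2 * L" using L0 by (simp add: a2_def a3_def cmod_def sqrt_4sq)
    also have "2 * L / r * J2 \<le> 4 * J2" using J2n L r by (intro mult_right_mono) (auto simp: divide_le_eq)
    finally show ?thesis .
  qed
  have b4: "cmod I4 \<le> 4 * J4"
  proof -
    have "cmod I4 \<le> cmod (a1 - a4) / r * J4"
      unfolding J4_def l4[symmetric]
    proof (rule seg_bound[OF I4[unfolded g_def] cseg(2)[OF s4] r(1)])
      fix t :: real
      have "r = \<bar>Re (linepath a4 a1 t - w0)\<bar>" unfolding l4 w0_def using r by simp
      then show "r \<le> cmod (linepath a4 a1 t - w0)" using abs_Re_le_cmod by metis
    qed
    also have "cmod (a1 - a4) = 2 * L" using L0 by (simp add: a4_def a1_def cmod_def sqrt_4sq)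
    also have "2 * L / r * J4 \<le> 4 * J4" using J4n L r by (intro mult_right_mono) (auto simp: divide_le_eq)
    finally show ?thesis .
  qed
  have "cmod I1 + cmod I2 + cmod I3 + cmod I4 \<le> 2 * J1 + 4 * J2 + 2 * J3 + 4 * J4"
    by (intro add_mono b1 b2 b3 b4)
  also have "\<dots> = 2 * (J1 + J3) + 4 * (J2 + J4)" by (simp add: algebra_simps)
  finally have "2 * pi * cmod (f w0) \<le> 2 * (J1 + J3) + 4 * (J2 + J4)" using tot by (rule order_trans[rotated])
  then show ?thesis unfolding J1_def J2_def J3_def J4_def w0_def .
qed

lemma cont_rect_map:
  assumes hol: "f holomorphic_on rhp" and X: "\<And>t. t \<in> {0..1} \<Longrightarrow> p + q * t > 0"
  shows "continuous_on ({0..1} \<times> {0..1}) (\<lambda>(s, t). cmod (f (Complex (p + q * t) (u + v * s))))"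
proof -
  have cf: "continuous_on rhp f" by (rule holomorphic_on_imp_continuous_on[OF hol])
  have cm: "continuous_on ({0..1} \<times> {0..1}) (\<lambda>z::real\<times>real. Complex (p + q * snd z) (u + v * fst z))"
    unfolding Complex_eq by (intro continuous_intros)
  have im: "(\<lambda>z::real\<times>real. Complex (p + q * snd z) (u + v * fst z)) ` ({0..1} \<times> {0..1}) \<subseteq> rhp"
    using X by auto
  have "continuous_on ({0..1} \<times> {0..1}) (\<lambda>z. f (Complex (p + q * snd z) (u + v * fst z)))"
    by (rule continuous_on_compose2[OF cf cm im])
  then have "continuous_on ({0..1} \<times> {0..1}) (\<lambda>z. cmod (f (Complex (p + q * snd z) (u + v * fst z))))"
    by (intro continuous_intros)
  then show ?thesis by (simp add: case_prod_beta')
qed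

lemma avg_bound:
  assumes hol: "f holomorphic_on rhp" and hb: "hb f H" and H: "H \<ge> 0" and \<tau>: "\<tau> > 0"
    and X: "\<And>t. t \<in> {0..1} \<Longrightarrow> p + q * t > 0" and v: "v \<noteq> 0"
  shows "(\<lambda>s. integral {0..1} (\<lambda>t. cmod (f (Complex (p + q * t) (u + v * s))))) integrable_on {0..1}"
    and "integral {0..1} (\<lambda>s. integral {0..1} (\<lambda>t. cmod (f (Complex (p + q * t) (u + v * s)))))
          \<le> \<tau> * H / (2 * \<bar>v\<bar>) + 1 / (2 * \<tau>)"
proof -
  define F where "F = (\<lambda>s t. cmod (f (Complex (p + q * t) (u + v * s))))"
  have c: "continuous_on ({0..1} \<times> {0..1}) (\<lambda>(s, t). F s t)" unfolding F_def by (rule cont_rect_map[OF hol X])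
  have c': "continuous_on (cbox (0, 0) (1, 1)) (\<lambda>(s, t). F s t)" unfolding cbox_Pair_eq
    using c by (simp only: cbox_interval)
  have cs: "continuous_on {0..1} (\<lambda>s. integral (cbox 0 1) (F s))"
    by (rule integral_continuous_on_param) (use c in \<open>simp add: cbox_interval\<close>)
  show "(\<lambda>s. integral {0..1} (\<lambda>t. cmod (f (Complex (p + q * t) (u + v * s))))) integrable_on {0..1}"
    using integrable_continuous_interval[OF cs] by (simp add: F_def cbox_interval)
  have cswap: "continuous_on ({0..1} \<times> {0..1}) (\<lambda>(t, s). F s t)"
  proof -
    have "continuous_on ({0..1} \<times> {0..1}) ((\<lambda>(s, t). F s t) \<circ> prod.swap)"
      by (rule continuous_on_compose[OF continuous_on_swap]) (use c in \<open>simp add: product_swap\<close>)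
    then show ?thesis by (simp add: comp_def case_prod_beta')
  qed
  have ct: "continuous_on {0..1} (\<lambda>t. integral (cbox 0 1) (\<lambda>s. F s t))"
    by (rule integral_continuous_on_param) (use cswap in \<open>simp add: cbox_interval\<close>)
  have "integral (cbox 0 1) (\<lambda>s. integral (cbox 0 1) (F s)) = integral (cbox 0 1) (\<lambda>t. integral (cbox 0 1) (\<lambda>s. F s t))"
    by (rule integral_swap_continuous[OF c'])
  also have "\<dots> \<le> integral (cbox 0 1) (\<lambda>t::real. \<tau> * H / (2 * \<bar>v\<bar>) + 1 / (2 * \<tau>))"
  proof (rule integral_le)
    show "(\<lambda>t. integral (cbox 0 1) (\<lambda>s. F s t)) integrable_on cbox 0 1"
      using integrable_continuous_interval[OF ct] by (simp add: cbox_interval)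
    show "(\<lambda>t::real. \<tau> * H / (2 * \<bar>v\<bar>) + 1 / (2 * \<tau>)) integrable_on cbox 0 1" by (rule integrable_const)
    fix t :: real assume t: "t \<in> cbox 0 1"
    then have Xt: "p + q * t > 0" using X by (simp add: cbox_interval)
    show "integral (cbox 0 1) (\<lambda>s. F s t) \<le> \<tau> * H / (2 * \<bar>v\<bar>) + 1 / (2 * \<tau>)"
      unfolding F_def cbox_interval by (rule line_int[OF hol hb H Xt v \<tau>])
  qed
  also have "\<dots> = \<tau> * H / (2 * \<bar>v\<bar>) + 1 / (2 * \<tau>)" by simp
  finally show "integral {0..1} (\<lambda>s. integral {0..1} (\<lambda>t. cmod (f (Complex (p + q * t) (u + v * s)))))
          \<le> \<tau> * H / (2 * \<bar>v\<bar>) + 1 / (2 * \<tau>)" by (simp add: F_def cbox_interval)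
qed

lemma arith4: "(P::real) \<le> 2 * (A + B) + 4 * (C + D) \<Longrightarrow> C \<le> X + Z \<Longrightarrow> D \<le> X + Z \<Longrightarrow> X \<le> Y
   \<Longrightarrow> P \<le> 2 * (A + B) + 4 * (2 * (Y + Z))"
  by (simp only: distrib_left)

lemma point_bound_tau:
  assumes hol: "f holomorphic_on rhp" and hb: "hb f H" and H: "H \<ge> 0" and r: "r > 0" "x0 > r"
    and \<tau>: "\<tau> > 0"
  shows "2 * pi * cmod (f (Complex x0 y0)) \<le> 4 * \<tau> * H / r + 6 / \<tau>"
proof -
  define Ib where "Ib = (\<lambda>s. integral {0..1} (\<lambda>t. cmod (f (Complex (x0 - r + 2 * r * t) (y0 - r + - r * s)))))"
  define It where "It = (\<lambda>s. integral {0..1} (\<lambda>t. cmod (f (Complex (x0 + r + - (2 * r) * t) (y0 + r + r * s)))))"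
  define c where "c = 2 * pi * cmod (f (Complex x0 y0)) - (2 * \<tau> * H / r + 4 / \<tau>)"
  have Xb: "x0 - r + 2 * r * t > 0" if "t \<in> {0..1}" for t
  proof -
    have "2 * r * t \<ge> 0" using that r by simp
    then show ?thesis using r by linarith
  qed
  have Xt: "x0 + r + - (2 * r) * t > 0" if "t \<in> {0..1}" for t
  proof -
    have "2 * r * t \<le> 2 * r" using that r by (intro mult_left_le) auto
    then show ?thesis using r by linarith
  qed
  have vb: "- r \<noteq> 0" and vt: "r \<noteq> 0" using r by auto
  have pw: "c / 2 \<le> Ib s + It s" if s: "s \<in> {0..1}" for s
  proof -
    define L where "L = r + r * s"
    have L: "r \<le> L" "L \<le> 2 * r" using s r by (auto simp: L_def)
    have L0: "L > 0" using L r by simp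
    have cr: "2 * pi * cmod (f (Complex x0 y0)) \<le>
     2 * (integral {0..1} (\<lambda>t. cmod (f (Complex (x0 - r + 2 * r * t) (y0 - L))))
        + integral {0..1} (\<lambda>t. cmod (f (Complex (x0 + r - 2 * r * t) (y0 + L)))))
   + 4 * (integral {0..1} (\<lambda>t. cmod (f (Complex (x0 + r) (y0 - L + 2 * L * t))))
        + integral {0..1} (\<lambda>t. cmod (f (Complex (x0 - r) (y0 + L + - (2 * L) * t)))))"
      by (rule cauchy_rect[OF hol r L])
    have e1: "(\<lambda>t. cmod (f (Complex (x0 - r + 2 * r * t) (y0 - L)))) =
              (\<lambda>t. cmod (f (Complex (x0 - r + 2 * r * t) (y0 - r + - r * s))))"
      unfolding L_def by (rule ext) (simp add: algebra_simps)
    have e2: "(\<lambda>t. cmod (f (Complex (x0 + r - 2 * r * t) (y0 + L)))) =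
              (\<lambda>t. cmod (f (Complex (x0 + r + - (2 * r) * t) (y0 + r + r * s))))"
      unfolding L_def by (rule ext) (simp add: algebra_simps)
    have v1: "integral {0..1} (\<lambda>t. cmod (f (Complex (x0 + r) (y0 - L + 2 * L * t))))
        \<le> \<tau> * H / (2 * \<bar>2 * L\<bar>) + 1 / (2 * \<tau>)"
      by (rule line_int[OF hol hb H _ _ \<tau>]) (use r L0 in auto)
    have v2: "integral {0..1} (\<lambda>t. cmod (f (Complex (x0 - r) (y0 + L + - (2 * L) * t))))
        \<le> \<tau> * H / (2 * \<bar>- (2 * L)\<bar>) + 1 / (2 * \<tau>)"
      by (rule line_int[OF hol hb H _ _ \<tau>]) (use r L0 in auto)
    have q: "\<tau> * H / (2 * \<bar>2 * L\<bar>) \<le> \<tau> * H / (4 * r)"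
      using L0 L r \<tau> H by (intro divide_left_mono mult_pos_pos) auto
    have q2: "\<bar>- (2 * L)\<bar> = \<bar>2 * L\<bar>" by simp
    have "2 * pi * cmod (f (Complex x0 y0)) \<le> 2 * (Ib s + It s) + 4 * (2 * (\<tau> * H / (4 * r) + 1 / (2 * \<tau>)))"
      unfolding Ib_def It_def by (rule arith4[OF cr[unfolded e1 e2] v1 v2[unfolded q2] q])
    also have "4 * (2 * (\<tau> * H / (4 * r) + 1 / (2 * \<tau>))) = 2 * \<tau> * H / r + 4 / \<tau>"
      using r \<tau> by (simp add: field_simps)
    finally show ?thesis unfolding c_def by simp
  qed
  have ib: "Ib integrable_on {0..1}" unfolding Ib_def by (rule avg_bound(1)[OF hol hb H \<tau> Xb vb])
  have it: "It integrable_on {0..1}" unfolding It_def by (rule avg_bound(1)[OF hol hb H \<tau> Xt vt])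
  have bb: "integral {0..1} Ib \<le> \<tau> * H / (2 * \<bar>- r\<bar>) + 1 / (2 * \<tau>)"
    unfolding Ib_def by (rule avg_bound(2)[OF hol hb H \<tau> Xb vb])
  have bt: "integral {0..1} It \<le> \<tau> * H / (2 * \<bar>r\<bar>) + 1 / (2 * \<tau>)"
    unfolding It_def by (rule avg_bound(2)[OF hol hb H \<tau> Xt vt])
  have "c / 2 = integral {0..1} (\<lambda>s::real. c / 2)" by simp
  also have "\<dots> \<le> integral {0..1} (\<lambda>s. Ib s + It s)"
    by (rule integral_le[OF integrable_const_ivl integrable_add[OF ib it]]) (use pw in auto)
  also have "\<dots> = integral {0..1} Ib + integral {0..1} It" by (rule integral_add[OF ib it])
  finally have c2: "c / 2 \<le> integral {0..1} Ib + integral {0..1} It" .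
  define U where "U = \<tau> * H / r"
  define V where "V = 1 / \<tau>"
  have e1: "\<tau> * H / (2 * \<bar>- r\<bar>) = U / 2" and e2: "\<tau> * H / (2 * \<bar>r\<bar>) = U / 2" and e3: "1 / (2 * \<tau>) = V / 2"
    using r \<tau> by (simp_all add: U_def V_def)
  have e4: "2 * \<tau> * H / r = 2 * U" and e5: "4 / \<tau> = 4 * V" and e6: "4 * \<tau> * H / r = 4 * U" and e7: "6 / \<tau> = 6 * V"
    by (simp_all add: U_def V_def)
  have "c \<le> 2 * U + 2 * V" using c2 bb bt unfolding e1 e2 e3 by linarith
  then show ?thesis unfolding c_def e4 e5 e6 e7 by linarith
qed

lemma point_bound:
  assumes hol: "f holomorphic_on rhp" and hb: "hb f H" and H: "H \<ge> 0" and r: "r > 0" "Re w > r"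
  shows "cmod (f w) \<le> 10 * sqrt (H / r)"
proof -
  have w: "w = Complex (Re w) (Im w)" by simp
  have A: "cmod (f w) \<le> 4 * \<tau> * H / r + 6 / \<tau>" if \<tau>: "\<tau> > 0" for \<tau>
  proof -
    have "2 * pi * cmod (f w) \<le> 4 * \<tau> * H / r + 6 / \<tau>"
      using point_bound_tau[OF hol hb H r \<tau>, of "Im w"] by (simp add: complex_surj)
    moreover have "cmod (f w) \<le> 2 * pi * cmod (f w)"
    proof -
      have "1 \<le> 2 * pi" using pi_gt3 by simp
      then show ?thesis using mult_right_mono[of 1 "2 * pi" "cmod (f w)"] by simp
    qed
    ultimately show ?thesis by linarith
  qed
  show ?thesis
  proof (cases "H = 0")
    case True
    have "cmod (f w) \<le> 0"
    proof (rule ccontr)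
      assume "\<not> cmod (f w) \<le> 0"
      then have p: "cmod (f w) > 0" by simp
      have "cmod (f w) \<le> 4 * (12 / cmod (f w)) * H / r + 6 / (12 / cmod (f w))"
        using A[of "12 / cmod (f w)"] p by simp
      then have "cmod (f w) \<le> cmod (f w) / 2" using True by simp
      then show False using p by simp
    qed
    then show ?thesis using True by simp
  next
    case False
    then have Hp: "H > 0" using H by simp
    define a where "a = sqrt r"
    define h where "h = sqrt H"
    have a: "a > 0" and h: "h > 0" using r Hp by (auto simp: a_def h_def)
    have ra: "r = a\<^sup>2" and Hh: "H = h\<^sup>2" using r H by (auto simp: a_def h_def)
    have "cmod (f w) \<le> 4 * (a / h) * H / r + 6 / (a / h)" using A[of "a / h"] a h by simp
    also have "4 * (a / h) * H / r + 6 / (a / h) = 10 * (h / a)"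
      unfolding ra Hh using a h by (simp add: power2_eq_square field_simps)
    also have "h / a = sqrt (H / r)" by (simp add: a_def h_def real_sqrt_divide)
    finally show ?thesis .
  qed
qed

lemma pb_H2:
  assumes g: "g \<in> H2" and r: "r > 0" "Re w > r"
  shows "cmod (g w) \<le> 10 * sqrt (pi / r) * H2_norm g"
proof -
  have hol: "g holomorphic_on rhp" and fin: "hardy_sup g < \<infinity>" using g by (auto simp: H2_def)
  have "cmod (g w) \<le> 10 * sqrt (pi * (H2_norm g)\<^sup>2 / r)"
    by (rule point_bound[OF hol norm_hb[OF fin] _ r]) simp
  also have "sqrt (pi * (H2_norm g)\<^sup>2 / r) = sqrt (pi / r) * H2_norm g"
    by (simp add: real_sqrt_mult real_sqrt_divide H2_norm_nonneg)
  finally show ?thesis by simp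
qed

lemma series_holo:
  assumes g: "\<And>k. g k \<in> H2" and c: "\<And>k. H2_norm (g k) \<le> c k" and sc: "summable c"
  shows "(\<lambda>w. \<Sum>k. g k w) holomorphic_on rhp" and "\<And>w. w \<in> rhp \<Longrightarrow> summable (\<lambda>k. g k w)"
proof -
  have bnd: "cmod (g k z) \<le> 10 * sqrt (pi / (Re w / 4)) * c k" if "w \<in> rhp" "z \<in> cball w (Re w / 2)" for k w z
  proof -
    have wp: "Re w > 0" using that(1) by (simp add: rhp_def)
    have "\<bar>Re w - Re z\<bar> \<le> cmod (w - z)" using abs_Re_le_cmod[of "w - z"] by simp
    moreover have "cmod (w - z) \<le> Re w / 2" using that(2) by (simp add: dist_norm)
    ultimately have "Re z > Re w / 4" using wp by linarith
    then have "cmod (g k z) \<le> 10 * sqrt (pi / (Re w / 4)) * H2_norm (g k)"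
      by (intro pb_H2[OF g]) (use wp in auto)
    also have "\<dots> \<le> 10 * sqrt (pi / (Re w / 4)) * c k" using c wp by (intro mult_left_mono) auto
    finally show ?thesis .
  qed
  have ul: "uniform_limit (cball w (Re w / 2)) (\<lambda>n z. \<Sum>k<n. g k z) (\<lambda>z. \<Sum>k. g k z) sequentially"
    if "w \<in> rhp" for w
    by (rule Weierstrass_m_test[OF bnd[OF that]]) (use sc in \<open>auto intro: summable_mult\<close>)
  have sub: "cball w (Re w / 2) \<subseteq> rhp" if "w \<in> rhp" for w
  proof
    fix z assume z: "z \<in> cball w (Re w / 2)"
    have wp: "Re w > 0" using that by (simp add: rhp_def)
    have "\<bar>Re w - Re z\<bar> \<le> cmod (w - z)" using abs_Re_le_cmod[of "w - z"] by simp
    moreover have "cmod (w - z) \<le> Re w / 2" using z by (simp add: dist_norm)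
    ultimately show "z \<in> rhp" using wp by (simp add: rhp_def)
  qed
  show "(\<lambda>w. \<Sum>k. g k w) holomorphic_on rhp"
  proof (rule holomorphic_uniform_sequence[OF open_rhp])
    show "(\<lambda>z. \<Sum>k<n. g k z) holomorphic_on rhp" for n
      using g by (intro holomorphic_on_sum) (auto simp: H2_def)
    fix w assume w: "w \<in> rhp"
    then have "Re w / 2 > 0" by (simp add: rhp_def)
    then show "\<exists>d>0. cball w d \<subseteq> rhp \<and> uniform_limit (cball w d) (\<lambda>n z. \<Sum>k<n. g k z) (\<lambda>z. \<Sum>k. g k z) sequentially"
      using sub[OF w] ul[OF w] by blast
  qed
  fix w assume w: "w \<in> rhp"
  have "summable (\<lambda>k. 10 * sqrt (pi / (Re w / 4)) * c k)" using sc by (rule summable_mult)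
  then show "summable (\<lambda>k. g k w)"
  proof (rule summable_comparison_test'[where N=0])
    have "Re w > 0" using w by (simp add: rhp_def)
    then have "w \<in> cball w (Re w / 2)" by simp
    then show "norm (g n w) \<le> 10 * sqrt (pi / (Re w / 4)) * c n" for n using bnd[OF w] by simp
  qed
qed

lemma series_norm:
  assumes g: "\<And>k. g k \<in> H2" and c: "\<And>k. H2_norm (g k) \<le> c k" and sc: "summable c"
  shows "(\<lambda>w. \<Sum>k. g k w) \<in> H2" and "H2_norm (\<lambda>w. \<Sum>k. g k w) \<le> (\<Sum>k. c k)"
proof -
  have c0: "c k \<ge> 0" for k using c[of k] H2_norm_nonneg[of "g k"] by linarith
  define C where "C = (\<Sum>k. c k)"
  have C0: "C \<ge> 0" unfolding C_def using c0 sc by (simp add: suminf_nonneg)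
  define S where "S = (\<lambda>N w. \<Sum>k<N. g k w)"
  have SH: "S N \<in> H2 \<and> H2_norm (S N) \<le> (\<Sum>k<N. c k)" for N
  proof (induction N)
    case 0 then show ?case using H2_zero by (simp add: S_def)
  next
    case (Suc N)
    have e: "S (Suc N) = (\<lambda>w. S N w + g N w)" by (simp add: S_def)
    have "H2_norm (S (Suc N)) \<le> H2_norm (S N) + H2_norm (g N)" unfolding e
      by (rule H2_add(2)) (use Suc g in auto)
    also have "\<dots> \<le> (\<Sum>k<N. c k) + c N" using Suc c by (intro add_mono) auto
    finally show ?case unfolding e using H2_add(1) Suc g by auto
  qed
  have SC: "H2_norm (S N) \<le> C" for N
    using SH[of N] sum_le_suminf[OF sc, of "{..<N}"] c0 unfolding C_def by force
  have hbS: "hb (S N) (pi * C\<^sup>2)" for N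
  proof -
    have "hb (S N) (pi * (H2_norm (S N))\<^sup>2)" using SH by (intro norm_hb) (auto simp: H2_def)
    moreover have "pi * (H2_norm (S N))\<^sup>2 \<le> pi * C\<^sup>2"
      using SC[of N] H2_norm_nonneg by (intro mult_left_mono power_mono) auto
    ultimately show ?thesis by (rule hb_mono)
  qed
  have hol: "(\<lambda>w. \<Sum>k. g k w) holomorphic_on rhp" and sm: "\<And>w. w \<in> rhp \<Longrightarrow> summable (\<lambda>k. g k w)"
    using series_holo[OF g c sc] by auto
  have hb: "hb (\<lambda>w. \<Sum>k. g k w) (pi * C\<^sup>2)"
    unfolding hb_def
  proof (intro allI impI)
    fix x :: real assume x: "x > 0"
    have lim: "(\<lambda>N. ennreal ((cmod (S N (Complex x y)))\<^sup>2)) \<longlonglongrightarrow> ennreal ((cmod (\<Sum>k. g k (Complex x y)))\<^sup>2)" for y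
    proof -
      have "(\<lambda>N. S N (Complex x y)) \<longlonglongrightarrow> (\<Sum>k. g k (Complex x y))"
        unfolding S_def by (rule summable_LIMSEQ) (rule sm, use x in simp)
      then show ?thesis by (intro tendsto_ennrealI tendsto_intros)
    qed
    have meas: "(\<lambda>y. ennreal ((cmod (S N (Complex x y)))\<^sup>2)) \<in> borel_measurable lborel" for N
      using meas_line[of "S N" x] SH x by (auto simp: H2_def)
    have "lin (\<lambda>w. \<Sum>k. g k w) x = (\<integral>\<^sup>+ y. liminf (\<lambda>N. ennreal ((cmod (S N (Complex x y)))\<^sup>2)) \<partial>lborel)"
    proof -
      have le: "liminf (\<lambda>N. ennreal ((cmod (S N (Complex x y)))\<^sup>2)) = ennreal ((cmod (\<Sum>k. g k (Complex x y)))\<^sup>2)" for y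
        by (rule lim_imp_Liminf[OF trivial_limit_sequentially lim])
      show ?thesis unfolding lin_def by (simp only: le)
    qed
    also have "\<dots> \<le> liminf (\<lambda>N. \<integral>\<^sup>+ y. ennreal ((cmod (S N (Complex x y)))\<^sup>2) \<partial>lborel)"
      by (rule nn_integral_liminf[OF meas])
    also have "\<dots> \<le> limsup (\<lambda>N. \<integral>\<^sup>+ y. ennreal ((cmod (S N (Complex x y)))\<^sup>2) \<partial>lborel)"
      by (rule Liminf_le_Limsup) simp
    also have "\<dots> \<le> ennreal (pi * C\<^sup>2)"
    proof (rule Limsup_bounded)
      show "\<forall>\<^sub>F N in sequentially. (\<integral>\<^sup>+ y. ennreal ((cmod (S N (Complex x y)))\<^sup>2) \<partial>lborel) \<le> ennreal (pi * C\<^sup>2)"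
        using hbS x unfolding hb_def lin_def by simp
    qed
    finally show "lin (\<lambda>w. \<Sum>k. g k w) x \<le> ennreal (pi * C\<^sup>2)" .
  qed
  show "(\<lambda>w. \<Sum>k. g k w) \<in> H2" using hol hb_fin[OF hb] by (simp add: H2_def)
  have "H2_norm (\<lambda>w. \<Sum>k. g k w) \<le> sqrt (pi * C\<^sup>2 / pi)" by (rule hb_norm[OF hb]) simp
  also have "\<dots> = C" using C0 by simp
  finally show "H2_norm (\<lambda>w. \<Sum>k. g k w) \<le> (\<Sum>k. c k)" unfolding C_def .
qed

lemma telescope:
  assumes step: "\<And>k w. xs (Suc k) w = e k w + xs k (\<phi> w)"
  shows "xs n w = xs 0 ((\<phi> ^^ n) w) + (\<Sum>k<n. e k ((\<phi> ^^ (n - Suc k)) w))"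
proof (induction n arbitrary: w)
  case 0 then show ?case by simp
next
  case (Suc n)
  have "xs (Suc n) w = e n w + xs n (\<phi> w)" by (rule step)
  also have "xs n (\<phi> w) = xs 0 ((\<phi> ^^ n) (\<phi> w)) + (\<Sum>k<n. e k ((\<phi> ^^ (n - Suc k)) (\<phi> w)))" by (rule Suc)
  also have "(\<phi> ^^ n) (\<phi> w) = (\<phi> ^^ Suc n) w" by (simp only: funpow_Suc_right comp_def)
  also have "(\<Sum>k<n. e k ((\<phi> ^^ (n - Suc k)) (\<phi> w))) = (\<Sum>k<n. e k ((\<phi> ^^ (Suc n - Suc k)) w))"
  proof (rule sum.cong[OF refl])
    fix k assume "k \<in> {..<n}"
    then have "Suc n - Suc k = Suc (n - Suc k)" by simp
    then show "e k ((\<phi> ^^ (n - Suc k)) (\<phi> w)) = e k ((\<phi> ^^ (Suc n - Suc k)) w)"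
      by (simp only: funpow_Suc_right comp_def)
  qed
  finally show ?case by (simp add: algebra_simps)
qed

lemma inv_pow:
  fixes \<phi> \<psi> :: "'a \<Rightarrow> 'a"
  assumes "\<And>w. \<psi> (\<phi> w) = w"
  shows "(\<psi> ^^ m) ((\<phi> ^^ m) w) = w"
proof (induction m arbitrary: w)
  case (Suc m)
  have e1: "(\<psi> ^^ Suc m) x = (\<psi> ^^ m) (\<psi> x)" for x by (simp only: funpow_Suc_right comp_def)
  have e2: "(\<phi> ^^ Suc m) w = \<phi> ((\<phi> ^^ m) w)" by simp
  have "(\<psi> ^^ Suc m) ((\<phi> ^^ Suc m) w) = (\<psi> ^^ m) (\<psi> (\<phi> ((\<phi> ^^ m) w)))"
    unfolding e2 e1 ..
  also have "\<dots> = w" using assms Suc by simp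
  finally show ?case .
qed simp

lemma H2_norm_swap: "H2_norm (\<lambda>w. f w - g w) = H2_norm (\<lambda>w. g w - f w)"
  unfolding H2_norm_def hardy_sup_def by (simp add: norm_minus_commute)

theorem case_expansive:
  assumes a: "0 < a" "a < 1" and b: "Re b = 0"
  shows "positive_shadowing H2 H2_dist (comp_op (\<lambda>w. complex_of_real a * w + b))"
  unfolding positive_shadowing_def
proof (intro allI impI)
  fix \<epsilon> :: real assume eps: "\<epsilon> > 0"
  define \<phi> where "\<phi> = (\<lambda>w. complex_of_real a * w + b)"
  define \<psi> where "\<psi> = (\<lambda>w. complex_of_real (1 / a) * w + (- b / complex_of_real a))"
  define T where "T = comp_op \<phi>"
  define S where "S = comp_op \<psi>"
  define q where "q = sqrt a"
  have q: "0 < q" "q < 1" using a by (auto simp: q_def)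
  have b': "Re b \<ge> 0" using b by simp
  have a': "1 / a > 0" using a by simp
  have bpsi: "Re (- b / complex_of_real a) \<ge> 0" using b by (simp add: Re_divide_of_real)
  have psiphi: "\<psi> (\<phi> w) = w" for w
    unfolding \<psi>_def \<phi>_def using a by (simp add: field_simps)
  have SH: "(S ^^ j) f \<in> H2 \<and> H2_norm ((S ^^ j) f) \<le> q ^ j * H2_norm f" if f: "f \<in> H2" for f j
  proof (induction j)
    case 0 then show ?case using f by simp
  next
    case (Suc j)
    have "(S ^^ Suc j) f = S ((S ^^ j) f)" by simp
    moreover have "S ((S ^^ j) f) \<in> H2" unfolding S_def \<psi>_def by (rule H2_T(1)[OF a' bpsi]) (use Suc in \<open>simp add: S_def \<psi>_def\<close>)
    moreover have "H2_norm (S ((S ^^ j) f)) \<le> H2_norm ((S ^^ j) f) / sqrt (1 / a)"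
      unfolding S_def \<psi>_def by (rule H2_T(2)[OF a' bpsi]) (use Suc in \<open>simp add: S_def \<psi>_def\<close>)
    moreover have "H2_norm ((S ^^ j) f) / sqrt (1 / a) = q * H2_norm ((S ^^ j) f)"
      using a by (simp add: q_def real_sqrt_divide)
    moreover have "q * H2_norm ((S ^^ j) f) \<le> q * (q ^ j * H2_norm f)" using Suc q by (intro mult_left_mono) auto
    ultimately show ?case by simp
  qed
  define \<delta> where "\<delta> = \<epsilon> * (1 - q)"
  have d: "\<delta> > 0" unfolding \<delta>_def using eps q by simp
  show "\<exists>\<delta>>0. \<forall>xs. (\<forall>n. xs n \<in> H2) \<and> (\<forall>n. H2_dist (comp_op (\<lambda>w. complex_of_real a * w + b) (xs n)) (xs (Suc n)) \<le> \<delta>) \<longrightarrow>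
          (\<exists>x\<in>H2. \<forall>n. H2_dist ((comp_op (\<lambda>w. complex_of_real a * w + b) ^^ n) x) (xs n) \<le> \<epsilon>)"
  proof (intro exI[of _ \<delta>] conjI allI impI d)
    fix xs assume h: "(\<forall>n. xs n \<in> H2) \<and> (\<forall>n. H2_dist (comp_op (\<lambda>w. complex_of_real a * w + b) (xs n)) (xs (Suc n)) \<le> \<delta>)"
    have xsH: "xs n \<in> H2" for n using h by simp
    have ps: "H2_dist (T (xs n)) (xs (Suc n)) \<le> \<delta>" for n using h unfolding T_def \<phi>_def by simp
    define e where "e = (\<lambda>k w. xs (Suc k) w - T (xs k) w)"
    have eH: "e k \<in> H2" for k unfolding e_def T_def \<phi>_def
      by (intro H2_diff(1) xsH H2_T(1)[OF a(1) b'])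
    have eN: "H2_norm (e k) \<le> \<delta>" for k
    proof -
      have "H2_norm (e k) = H2_norm (\<lambda>w. T (xs k) w - xs (Suc k) w)" unfolding e_def by (rule H2_norm_swap)
      then show ?thesis using ps[of k] unfolding H2_dist_def by simp
    qed
    define G where "G = (\<lambda>n j. (S ^^ Suc j) (e (n + j)))"
    define c where "c = (\<lambda>j::nat. \<delta> * q * q ^ j)"
    have GH: "G n j \<in> H2" for n j unfolding G_def using SH[OF eH] by blast
    have GN: "H2_norm (G n j) \<le> c j" for n j
    proof -
      have "H2_norm (G n j) \<le> q ^ Suc j * H2_norm (e (n + j))" unfolding G_def using SH[OF eH] by blast
      also have "\<dots> \<le> q ^ Suc j * \<delta>" using eN q by (intro mult_left_mono) auto
      finally show ?thesis by (simp add: c_def mult_ac)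
    qed
    have sc: "summable c" unfolding c_def using q by (intro summable_mult summable_geometric) auto
    have sumc: "(\<Sum>j. c j) = \<delta> * q / (1 - q)"
      unfolding c_def using q by (simp add: suminf_mult suminf_geometric)
    have sumc_le: "\<delta> * q / (1 - q) \<le> \<epsilon>"
      unfolding \<delta>_def using q eps by (simp add: mult_left_le)
    define X where "X = (\<lambda>w. xs 0 w + (\<Sum>k. G 0 k w))"
    have XH: "X \<in> H2" unfolding X_def by (intro H2_add(1) xsH series_norm(1)[OF GH GN sc])
    have tel: "xs n w = xs 0 ((\<phi> ^^ n) w) + (\<Sum>k<n. e k ((\<phi> ^^ (n - Suc k)) w))" for n w
      by (rule telescope) (simp add: e_def T_def comp_op_def)
    have key: "(T ^^ n) X w - xs n w = (\<Sum>j. G n j w)" if w: "w \<in> rhp" for n w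
    proof -
      define v where "v = (\<phi> ^^ n) w"
      have v: "v \<in> rhp" unfolding v_def \<phi>_def by (rule aff_pow_rhp[OF a(1) b' w])
      have sm: "summable (\<lambda>k. G 0 k v)" by (rule series_holo(2)[OF GH GN sc v])
      have "(\<Sum>k. G 0 k v) = (\<Sum>j. G 0 (j + n) v) + (\<Sum>k<n. G 0 k v)"
        by (rule suminf_split_initial_segment[OF sm])
      moreover have "G 0 (j + n) v = G n j w" for j
      proof -
        have "(\<psi> ^^ Suc (j + n)) ((\<phi> ^^ n) w) = (\<psi> ^^ Suc j) ((\<psi> ^^ n) ((\<phi> ^^ n) w))"
          by (simp only: add_Suc[symmetric] funpow_add comp_def)
        also have "\<dots> = (\<psi> ^^ Suc j) w" by (simp only: inv_pow[where \<psi>=\<psi> and \<phi>=\<phi>, OF psiphi])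
        finally have ee: "(\<psi> ^^ Suc (j + n)) v = (\<psi> ^^ Suc j) w" unfolding v_def .
        have g1: "G 0 (j + n) v = e (j + n) ((\<psi> ^^ Suc (j + n)) v)" unfolding G_def S_def by (simp only: comp_op_pow_app add_0)
        have g2: "G n j w = e (n + j) ((\<psi> ^^ Suc j) w)" unfolding G_def S_def by (simp only: comp_op_pow_app)
        show ?thesis unfolding g1 g2 ee by (simp add: add.commute)
      qed
      moreover have "G 0 k v = e k ((\<phi> ^^ (n - Suc k)) w)" if "k < n" for k
      proof -
        have "n = Suc k + (n - Suc k)" using that by simp
        then have "(\<phi> ^^ n) w = (\<phi> ^^ Suc k) ((\<phi> ^^ (n - Suc k)) w)"
          by (metis funpow_add comp_def)
        then have "(\<psi> ^^ Suc k) ((\<phi> ^^ n) w) = (\<phi> ^^ (n - Suc k)) w"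
          by (simp only: inv_pow[where \<psi>=\<psi> and \<phi>=\<phi>, OF psiphi])
        moreover have "G 0 k v = e k ((\<psi> ^^ Suc k) v)" unfolding G_def S_def by (simp only: comp_op_pow_app add_0)
        ultimately show ?thesis unfolding v_def by simp
      qed
      ultimately have "(\<Sum>k. G 0 k v) = (\<Sum>j. G n j w) + (\<Sum>k<n. e k ((\<phi> ^^ (n - Suc k)) w))"
        by simp
      moreover have "(T ^^ n) X w = xs 0 v + (\<Sum>k. G 0 k v)"
        unfolding T_def X_def v_def by (simp add: comp_op_pow_app)
      ultimately show ?thesis using tel[of n w] unfolding v_def by simp
    qed
    show "\<exists>x\<in>H2. \<forall>n. H2_dist ((comp_op (\<lambda>w. complex_of_real a * w + b) ^^ n) x) (xs n) \<le> \<epsilon>"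
    proof (intro bexI[OF _ XH] allI)
      fix n
      have "H2_dist ((T ^^ n) X) (xs n) = H2_norm (\<lambda>w. \<Sum>j. G n j w)"
        unfolding H2_dist_def by (rule norm_cong) (rule key)
      also have "\<dots> \<le> (\<Sum>j. c j)" by (rule series_norm(2)[OF GH GN sc])
      finally show "H2_dist ((comp_op (\<lambda>w. complex_of_real a * w + b) ^^ n) X) (xs n) \<le> \<epsilon>"
        using sumc sumc_le unfolding T_def \<phi>_def by simp
    qed
  qed
qed

theorem case_contr:
  assumes a: "a > 1" and b: "Re b \<ge> 0"
  shows "positive_shadowing H2 H2_dist (comp_op (\<lambda>w. complex_of_real a * w + b))"
proof (rule shadow_contr[where q = "1 / sqrt a"])
  have a0: "a > 0" using a by simp
  fix f assume f: "f \<in> H2"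
  show "comp_op (\<lambda>w. complex_of_real a * w + b) f \<in> H2 \<and>
        H2_norm (comp_op (\<lambda>w. complex_of_real a * w + b) f) \<le> 1 / sqrt a * H2_norm f"
    using H2_T[OF a0 b f] by simp
next
  fix f g :: "complex \<Rightarrow> complex"
  show "comp_op (\<lambda>w. complex_of_real a * w + b) (\<lambda>w. f w - g w) =
        (\<lambda>w. comp_op (\<lambda>w. complex_of_real a * w + b) f w - comp_op (\<lambda>w. complex_of_real a * w + b) g w)"
    by (simp add: comp_op_def comp_def)
next
  show "0 \<le> 1 / sqrt a" using a by simp
  show "1 / sqrt a < 1" using a by simp
qed

theorem theorem4p2:
  fixes a :: real and b :: complex
  assumes "a > 0" and "Re b \<ge> 0"
  defines "\<phi> \<equiv> (\<lambda>w. complex_of_real a * w + b)"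
  shows "(((a \<noteq> 1 \<and> Re b = 0) \<or> (a > 1 \<and> Re b > 0)) \<longrightarrow>
            positive_shadowing H2 H2_dist (comp_op \<phi>))
       \<and> ((a = 1 \<or> (a < 1 \<and> Re b > 0)) \<longrightarrow>
            \<not> positive_shadowing H2 H2_dist (comp_op \<phi>))"
proof (intro conjI impI)
  assume h: "(a \<noteq> 1 \<and> Re b = 0) \<or> (a > 1 \<and> Re b > 0)"
  show "positive_shadowing H2 H2_dist (comp_op \<phi>)"
  proof (cases "a > 1")
    case True
    then show ?thesis unfolding \<phi>_def by (rule case_contr[OF _ assms(2)])
  next
    case False
    then have "a < 1" "Re b = 0" using h by auto
    then show ?thesis unfolding \<phi>_def using case_expansive assms(1) by blast
  qed
next
  assume h: "a = 1 \<or> (a < 1 \<and> Re b > 0)"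
  show "\<not> positive_shadowing H2 H2_dist (comp_op \<phi>)"
  proof (cases "a = 1")
    case True
    show ?thesis
    proof (cases "Re b = 0")
      case True
      then show ?thesis unfolding \<phi>_def using case_parabolic_aut \<open>a = 1\<close> by blast
    next
      case False
      then have "Re b > 0" using assms(2) by simp
      then show ?thesis unfolding \<phi>_def using case_parabolic_nonaut \<open>a = 1\<close> by blast
    qed
  next
    case False
    then have "a < 1" "Re b > 0" using h by auto
    then show ?thesis unfolding \<phi>_def using case_hyp_typeI assms(1) by blast
  qed
qed

end
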